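(* Let $(!, \delta, \varepsilon, \mathsf{m}, \mathsf{m}_K)$ be a symmetric monoidal comonad on a symmetric monoidal category $(\mathbb{X}, \otimes, K)$. Then the following are in bijective correspondence: (1) Cocommutative bimonoids in $(\mathbb{X}^!, \otimes^\mathsf{m}, (K, \mathsf{m}_K))$; (2) Cocommutative bimonoids $(A, \nabla, \mathsf{u}, \Delta, \mathsf{e})$ in $(\mathbb{X}, \otimes, K)$ equipped with a natural transformation $\lambda_X: A \otimes !(X) \to !(A \otimes X)$ such that $\lambda$ is a symmetric monoidal mixed distributive law of the symmetric comonoidal monad $(A \otimes -, \mu^\nabla, \eta^\mathsf{u}, \mathsf{n}^\Delta, \mathsf{n}^\mathsf{e}_K)$ over $(!, \delta, \varepsilon, \mathsf{m}, \mathsf{m}_K)$ and $\alpha_{A,!(X),!(Y)};(\lambda_X\otimes 1_{!(Y)});\mathsf{m}_{A\otimes X,Y} = (1_A\otimes \mathsf{m}_{X,Y});\lambda_{X\otimes Y};!(\alpha_{A,X,Y})$ as maps $A\otimes(!(X)\otimes !(Y))\to !((A\otimes X)\otimes Y)$.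
   Context: Composition is in diagrammatic order ($f;g$ = first $f$ then $g$); $\alpha,\ell,\rho,\sigma$ are the associator, left/right unitors and symmetry, and $\tau_{A,B,C,D}:(A\otimes B)\otimes(C\otimes D)\to(A\otimes C)\otimes(B\otimes D)$ is the canonical interchange isomorphism. A symmetric monoidal comonad $(!,\delta,\varepsilon,\mathsf{m},\mathsf{m}_K)$ is a comonad with symmetric lax monoidal structure $\mathsf{m}_{A,B}:!(A)\otimes!(B)\to!(A\otimes B)$, $\mathsf{m}_K:K\to!(K)$ for which $\delta,\varepsilon$ are monoidal; its Eilenberg-Moore category $\mathbb{X}^!$ of $!$-coalgebras is symmetric monoidal with $(A,\omega)\otimes^\mathsf{m}(B,\omega')=(A\otimes B,(\omega\otimes\omega');\mathsf{m}_{A,B})$ and unit $(K,\mathsf{m}_K)$. For a cocommutative bimonoid $(A,\nabla,\mathsf{u},\Delta,\mathsf{e})$ the symmetric comonoidal monad $A\otimes-$ has $\mu^\nabla_X=\alpha_{A,A,X};(\nabla\otimes 1_X)$, $\eta^\mathsf{u}_X=\ell^{-1}_X;(\mathsf{u}\otimes 1_X)$, $\mathsf{n}^\Delta_{X,Y}=(\Delta\otimes 1_{X\otimes Y});\tau_{A,A,X,Y}$, $\mathsf{n}^\mathsf{e}_K=\rho_A;\mathsf{e}$. A mixed distributive law of a monad $(\mathsf{T},\mu,\eta)$ over $(!,\delta,\varepsilon)$ is a natural $\lambda_X:\mathsf{T}!(X)\to!\mathsf{T}(X)$ with $\mu_{!(X)};\lambda_X=\mathsf{T}(\lambda_X);\lambda_{\mathsf{T}(X)};!(\mu_X)$,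 $\eta_{!(X)};\lambda_X=!(\eta_X)$, $\mathsf{T}(\delta_X);\lambda_{!(X)};!(\lambda_X)=\lambda_X;\delta_{\mathsf{T}(X)}$, $\lambda_X;\varepsilon_{\mathsf{T}(X)}=\mathsf{T}(\varepsilon_X)$; for a symmetric comonoidal monad $(\mathsf{T},\mu,\eta,\mathsf{n},\mathsf{n}_K)$ it is symmetric monoidal if also $\mathsf{n}_{!(X),!(Y)};(\lambda_X\otimes\lambda_Y);\mathsf{m}_{\mathsf{T}(X),\mathsf{T}(Y)}=\mathsf{T}(\mathsf{m}_{X,Y});\lambda_{X\otimes Y};!(\mathsf{n}_{X,Y})$ and $\mathsf{n}_K;\mathsf{m}_K=\mathsf{T}(\mathsf{m}_K);\lambda_K;!(\mathsf{n}_K)$. *)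

theory Defs
  imports Main
begin

section \<open>Symmetric monoidal categories (composition in diagrammatic order)\<close>

text \<open>Conventions (as in the paper): Cmp C f g is f;g (first f then g);
  Asc C A B D : A(BD) -> (AB)D;  LUn C X : K X -> X;  RUn C X : X K -> X;
  Swp C X Y : X Y -> Y X.\<close>

record ('o,'a) smcat =
  Obj  :: "'o set"
  Arr  :: "'a set"
  Src  :: "'a \<Rightarrow> 'o"
  Tgt  :: "'a \<Rightarrow> 'o"
  Idm  :: "'o \<Rightarrow> 'a"
  Cmp  :: "'a \<Rightarrow> 'a \<Rightarrow> 'a"
  TOb  :: "'o \<Rightarrow> 'o \<Rightarrow> 'o"
  TAr  :: "'a \<Rightarrow> 'a \<Rightarrow> 'a"
  Unt  :: "'o"
  Asc  :: "'o \<Rightarrow> 'o \<Rightarrow> 'o \<Rightarrow> 'a"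
  LUn  :: "'o \<Rightarrow> 'a"
  RUn  :: "'o \<Rightarrow> 'a"
  Swp  :: "'o \<Rightarrow> 'o \<Rightarrow> 'a"

definition Hom :: "('o,'a,'c) smcat_scheme \<Rightarrow> 'o \<Rightarrow> 'o \<Rightarrow> 'a set" where
  "Hom C X Y = {f \<in> Arr C. Src C f = X \<and> Tgt C f = Y}"

definition is_category :: "('o,'a,'c) smcat_scheme \<Rightarrow> bool" where
  "is_category C \<longleftrightarrow>
    (\<forall>f\<in>Arr C. Src C f \<in> Obj C \<and> Tgt C f \<in> Obj C) \<and>
    (\<forall>X\<in>Obj C. Idm C X \<in> Hom C X X) \<and>
    (\<forall>f\<in>Arr C. \<forall>g\<in>Arr C. Tgt C f = Src C g \<longrightarrow> Cmp C f g \<in> Hom C (Src C f) (Tgt C g)) \<and>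
    (\<forall>f\<in>Arr C. Cmp C (Idm C (Src C f)) f = f \<and> Cmp C f (Idm C (Tgt C f)) = f) \<and>
    (\<forall>f\<in>Arr C. \<forall>g\<in>Arr C. \<forall>h\<in>Arr C. Tgt C f = Src C g \<longrightarrow> Tgt C g = Src C h \<longrightarrow>
        Cmp C (Cmp C f g) h = Cmp C f (Cmp C g h))"

definition is_iso :: "('o,'a,'c) smcat_scheme \<Rightarrow> 'a \<Rightarrow> bool" where
  "is_iso C f \<longleftrightarrow> f \<in> Arr C \<and>
     (\<exists>g\<in>Hom C (Tgt C f) (Src C f). Cmp C f g = Idm C (Src C f) \<and> Cmp C g f = Idm C (Tgt C f))"

definition Inv :: "('o,'a,'c) smcat_scheme \<Rightarrow> 'a \<Rightarrow> 'a" where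
  "Inv C f = (THE g. g \<in> Hom C (Tgt C f) (Src C f) \<and> Cmp C f g = Idm C (Src C f) \<and> Cmp C g f = Idm C (Tgt C f))"

definition is_smc :: "('o,'a,'c) smcat_scheme \<Rightarrow> bool" where
  "is_smc C \<longleftrightarrow> is_category C \<and> Unt C \<in> Obj C \<and>
    \<comment> \<open>tensor is a bifunctor\<close>
    (\<forall>X\<in>Obj C. \<forall>Y\<in>Obj C. TOb C X Y \<in> Obj C) \<and>
    (\<forall>f\<in>Arr C. \<forall>g\<in>Arr C. TAr C f g \<in> Hom C (TOb C (Src C f) (Src C g)) (TOb C (Tgt C f) (Tgt C g))) \<and>
    (\<forall>X\<in>Obj C. \<forall>Y\<in>Obj C. TAr C (Idm C X) (Idm C Y) = Idm C (TOb C X Y)) \<and>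
    (\<forall>f\<in>Arr C. \<forall>g\<in>Arr C. \<forall>f'\<in>Arr C. \<forall>g'\<in>Arr C. Tgt C f = Src C g \<longrightarrow> Tgt C f' = Src C g' \<longrightarrow>
        TAr C (Cmp C f g) (Cmp C f' g') = Cmp C (TAr C f f') (TAr C g g')) \<and>
    \<comment> \<open>associator  A(BD) -> (AB)D, natural isomorphism\<close>
    (\<forall>X\<in>Obj C. \<forall>Y\<in>Obj C. \<forall>Z\<in>Obj C.
        Asc C X Y Z \<in> Hom C (TOb C X (TOb C Y Z)) (TOb C (TOb C X Y) Z) \<and> is_iso C (Asc C X Y Z)) \<and>
    (\<forall>f\<in>Arr C. \<forall>g\<in>Arr C. \<forall>h\<in>Arr C.
        Cmp C (TAr C f (TAr C g h)) (Asc C (Tgt C f) (Tgt C g) (Tgt C h))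
      = Cmp C (Asc C (Src C f) (Src C g) (Src C h)) (TAr C (TAr C f g) h)) \<and>
    \<comment> \<open>left unitor  K X -> X\<close>
    (\<forall>X\<in>Obj C. LUn C X \<in> Hom C (TOb C (Unt C) X) X \<and> is_iso C (LUn C X)) \<and>
    (\<forall>f\<in>Arr C. Cmp C (TAr C (Idm C (Unt C)) f) (LUn C (Tgt C f)) = Cmp C (LUn C (Src C f)) f) \<and>
    \<comment> \<open>right unitor  X K -> X\<close>
    (\<forall>X\<in>Obj C. RUn C X \<in> Hom C (TOb C X (Unt C)) X \<and> is_iso C (RUn C X)) \<and>
    (\<forall>f\<in>Arr C. Cmp C (TAr C f (Idm C (Unt C))) (RUn C (Tgt C f)) = Cmp C (RUn C (Src C f)) f) \<and>
    \<comment> \<open>symmetry\<close>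
    (\<forall>X\<in>Obj C. \<forall>Y\<in>Obj C. Swp C X Y \<in> Hom C (TOb C X Y) (TOb C Y X) \<and>
        Cmp C (Swp C X Y) (Swp C Y X) = Idm C (TOb C X Y)) \<and>
    (\<forall>f\<in>Arr C. \<forall>g\<in>Arr C.
        Cmp C (TAr C f g) (Swp C (Tgt C f) (Tgt C g)) = Cmp C (Swp C (Src C f) (Src C g)) (TAr C g f)) \<and>
    \<comment> \<open>pentagon\<close>
    (\<forall>A\<in>Obj C. \<forall>B\<in>Obj C. \<forall>D\<in>Obj C. \<forall>E\<in>Obj C.
        Cmp C (Asc C A B (TOb C D E)) (Asc C (TOb C A B) D E)
      = Cmp C (Cmp C (TAr C (Idm C A) (Asc C B D E)) (Asc C A (TOb C B D) E)) (TAr C (Asc C A B D) (Idm C E))) \<and>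
    \<comment> \<open>triangle\<close>
    (\<forall>A\<in>Obj C. \<forall>B\<in>Obj C.
        Cmp C (Asc C A (Unt C) B) (TAr C (RUn C A) (Idm C B)) = TAr C (Idm C A) (LUn C B)) \<and>
    \<comment> \<open>hexagon\<close>
    (\<forall>A\<in>Obj C. \<forall>B\<in>Obj C. \<forall>D\<in>Obj C.
        Cmp C (Cmp C (Asc C A B D) (Swp C (TOb C A B) D)) (Asc C D A B)
      = Cmp C (Cmp C (TAr C (Idm C A) (Swp C B D)) (Asc C A D B)) (TAr C (Swp C A D) (Idm C B)))"

text \<open>Canonical interchange  tau : (AB)(CD) -> (AC)(BD).\<close>
definition Tau :: "('o,'a,'c) smcat_scheme \<Rightarrow> 'o \<Rightarrow> 'o \<Rightarrow> 'o \<Rightarrow> 'o \<Rightarrow> 'a" where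
  "Tau C A B D E =
     Cmp C (Inv C (Asc C A B (TOb C D E)))
    (Cmp C (TAr C (Idm C A) (Asc C B D E))
    (Cmp C (TAr C (Idm C A) (TAr C (Swp C B D) (Idm C E)))
    (Cmp C (TAr C (Idm C A) (Inv C (Asc C D B E)))
           (Asc C A D (TOb C B E)))))"

record ('o,'a) smcomonad =
  BOb :: "'o \<Rightarrow> 'o"     \<comment> \<open>! on objects\<close>
  BAr :: "'a \<Rightarrow> 'a"     \<comment> \<open>! on arrows\<close>
  Dl  :: "'o \<Rightarrow> 'a"
  Ep  :: "'o \<Rightarrow> 'a"
  Mm  :: "'o \<Rightarrow> 'o \<Rightarrow> 'a"  \<comment> \<open>m_{X,Y} : !X !Y -> !(XY)\<close>
  MK  :: "'a"             \<comment> \<open>m_K : K -> !K\<close>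

definition is_sm_comonad :: "('o,'a,'c) smcat_scheme \<Rightarrow> ('o,'a,'d) smcomonad_scheme \<Rightarrow> bool" where
  "is_sm_comonad C B \<longleftrightarrow>
    \<comment> \<open>functor\<close>
    (\<forall>X\<in>Obj C. BOb B X \<in> Obj C) \<and>
    (\<forall>f\<in>Arr C. BAr B f \<in> Hom C (BOb B (Src C f)) (BOb B (Tgt C f))) \<and>
    (\<forall>X\<in>Obj C. BAr B (Idm C X) = Idm C (BOb B X)) \<and>
    (\<forall>f\<in>Arr C. \<forall>g\<in>Arr C. Tgt C f = Src C g \<longrightarrow> BAr B (Cmp C f g) = Cmp C (BAr B f) (BAr B g)) \<and>
    \<comment> \<open>delta, epsilon natural\<close>
    (\<forall>X\<in>Obj C. Dl B X \<in> Hom C (BOb B X) (BOb B (BOb B X)) \<and> Ep B X \<in> Hom C (BOb B X) X) \<and>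
    (\<forall>f\<in>Arr C. Cmp C (BAr B f) (Dl B (Tgt C f)) = Cmp C (Dl B (Src C f)) (BAr B (BAr B f))) \<and>
    (\<forall>f\<in>Arr C. Cmp C (BAr B f) (Ep B (Tgt C f)) = Cmp C (Ep B (Src C f)) f) \<and>
    \<comment> \<open>comonad laws\<close>
    (\<forall>X\<in>Obj C. Cmp C (Dl B X) (Ep B (BOb B X)) = Idm C (BOb B X) \<and>
                Cmp C (Dl B X) (BAr B (Ep B X)) = Idm C (BOb B X) \<and>
                Cmp C (Dl B X) (Dl B (BOb B X)) = Cmp C (Dl B X) (BAr B (Dl B X))) \<and>
    \<comment> \<open>lax monoidal structure\<close>
    (\<forall>X\<in>Obj C. \<forall>Y\<in>Obj C. Mm B X Y \<in> Hom C (TOb C (BOb B X) (BOb B Y)) (BOb B (TOb C X Y))) \<and>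
    MK B \<in> Hom C (Unt C) (BOb B (Unt C)) \<and>
    (\<forall>f\<in>Arr C. \<forall>g\<in>Arr C.
        Cmp C (TAr C (BAr B f) (BAr B g)) (Mm B (Tgt C f) (Tgt C g))
      = Cmp C (Mm B (Src C f) (Src C g)) (BAr B (TAr C f g))) \<and>
    (\<forall>X\<in>Obj C. \<forall>Y\<in>Obj C. \<forall>Z\<in>Obj C.
        Cmp C (Cmp C (TAr C (Idm C (BOb B X)) (Mm B Y Z)) (Mm B X (TOb C Y Z))) (BAr B (Asc C X Y Z))
      = Cmp C (Cmp C (Asc C (BOb B X) (BOb B Y) (BOb B Z)) (TAr C (Mm B X Y) (Idm C (BOb B Z)))) (Mm B (TOb C X Y) Z)) \<and>
    (\<forall>X\<in>Obj C.
        Cmp C (Cmp C (TAr C (MK B) (Idm C (BOb B X))) (Mm B (Unt C) X)) (BAr B (LUn C X)) = LUn C (BOb B X) \<and>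
        Cmp C (Cmp C (TAr C (Idm C (BOb B X)) (MK B)) (Mm B X (Unt C))) (BAr B (RUn C X)) = RUn C (BOb B X)) \<and>
    \<comment> \<open>symmetric\<close>
    (\<forall>X\<in>Obj C. \<forall>Y\<in>Obj C.
        Cmp C (Mm B X Y) (BAr B (Swp C X Y)) = Cmp C (Swp C (BOb B X) (BOb B Y)) (Mm B Y X)) \<and>
    \<comment> \<open>delta and epsilon are monoidal\<close>
    (\<forall>X\<in>Obj C. \<forall>Y\<in>Obj C.
        Cmp C (Mm B X Y) (Dl B (TOb C X Y))
      = Cmp C (Cmp C (TAr C (Dl B X) (Dl B Y)) (Mm B (BOb B X) (BOb B Y))) (BAr B (Mm B X Y)) \<and>
        Cmp C (Mm B X Y) (Ep B (TOb C X Y)) = TAr C (Ep B X) (Ep B Y)) \<and>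
    Cmp C (MK B) (Dl B (Unt C)) = Cmp C (MK B) (BAr B (MK B)) \<and>
    Cmp C (MK B) (Ep B (Unt C)) = Idm C (Unt C)"

section \<open>Coalgebras (objects of the Eilenberg-Moore category)\<close>

definition is_coalg :: "('o,'a,'c) smcat_scheme \<Rightarrow> ('o,'a,'d) smcomonad_scheme \<Rightarrow> 'o \<Rightarrow> 'a \<Rightarrow> bool" where
  "is_coalg C B A w \<longleftrightarrow> A \<in> Obj C \<and> w \<in> Hom C A (BOb B A) \<and>
     Cmp C w (Ep B A) = Idm C A \<and> Cmp C w (Dl B A) = Cmp C w (BAr B w)"

definition is_coalg_mor :: "('o,'a,'c) smcat_scheme \<Rightarrow> ('o,'a,'d) smcomonad_scheme \<Rightarrow>
     'o \<Rightarrow> 'a \<Rightarrow> 'o \<Rightarrow> 'a \<Rightarrow> 'a \<Rightarrow> bool" where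
  "is_coalg_mor C B A w A' w' f \<longleftrightarrow> f \<in> Hom C A A' \<and> Cmp C f w' = Cmp C w (BAr B f)"

definition tcoalg :: "('o,'a,'c) smcat_scheme \<Rightarrow> ('o,'a,'d) smcomonad_scheme \<Rightarrow> 'o \<Rightarrow> 'a \<Rightarrow> 'o \<Rightarrow> 'a \<Rightarrow> 'a" where
  "tcoalg C B A w A' w' = Cmp C (TAr C w w') (Mm B A A')"

definition is_bimonoid :: "('o,'a,'c) smcat_scheme \<Rightarrow> 'o \<Rightarrow> 'a \<Rightarrow> 'a \<Rightarrow> 'a \<Rightarrow> 'a \<Rightarrow> bool" where
  "is_bimonoid C A mu u d e \<longleftrightarrow> A \<in> Obj C \<and>
    mu \<in> Hom C (TOb C A A) A \<and> u \<in> Hom C (Unt C) A \<and>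
    d \<in> Hom C A (TOb C A A) \<and> e \<in> Hom C A (Unt C) \<and>
    \<comment> \<open>monoid\<close>
    Cmp C (Cmp C (Asc C A A A) (TAr C mu (Idm C A))) mu = Cmp C (TAr C (Idm C A) mu) mu \<and>
    Cmp C (TAr C u (Idm C A)) mu = LUn C A \<and>
    Cmp C (TAr C (Idm C A) u) mu = RUn C A \<and>
    \<comment> \<open>comonoid\<close>
    Cmp C (Cmp C d (TAr C (Idm C A) d)) (Asc C A A A) = Cmp C d (TAr C d (Idm C A)) \<and>
    Cmp C (Cmp C d (TAr C e (Idm C A))) (LUn C A) = Idm C A \<and>
    Cmp C (Cmp C d (TAr C (Idm C A) e)) (RUn C A) = Idm C A \<and>
    \<comment> \<open>compatibility\<close>
    Cmp C mu d = Cmp C (Cmp C (TAr C d d) (Tau C A A A A)) (TAr C mu mu) \<and>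
    Cmp C u d = Cmp C (Inv C (LUn C (Unt C))) (TAr C u u) \<and>
    Cmp C mu e = Cmp C (TAr C e e) (LUn C (Unt C)) \<and>
    Cmp C u e = Idm C (Unt C)"

definition is_cocomm_bimonoid :: "('o,'a,'c) smcat_scheme \<Rightarrow> 'o \<Rightarrow> 'a \<Rightarrow> 'a \<Rightarrow> 'a \<Rightarrow> 'a \<Rightarrow> bool" where
  "is_cocomm_bimonoid C A mu u d e \<longleftrightarrow>
     is_bimonoid C A mu u d e \<and> Cmp C d (Swp C A A) = d"

text \<open>A cocommutative bimonoid in the symmetric monoidal category of !-coalgebras
  (X^!, (x)^m, (K, m_K)) whose underlying object is the coalgebra (A,w).  Since
  composition, tensor and all structure maps of X^! are those of X, this is a
  cocommutative bimonoid in X whose four structure maps are coalgebra morphisms.\<close>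
definition is_EM_cocomm_bimonoid :: "('o,'a,'c) smcat_scheme \<Rightarrow> ('o,'a,'d) smcomonad_scheme \<Rightarrow>
     'o \<Rightarrow> 'a \<Rightarrow> 'a \<Rightarrow> 'a \<Rightarrow> 'a \<Rightarrow> 'a \<Rightarrow> bool" where
  "is_EM_cocomm_bimonoid C B A w mu u d e \<longleftrightarrow>
     is_coalg C B A w \<and> is_cocomm_bimonoid C A mu u d e \<and>
     is_coalg_mor C B (TOb C A A) (tcoalg C B A w A w) A w mu \<and>
     is_coalg_mor C B (Unt C) (MK B) A w u \<and>
     is_coalg_mor C B A w (TOb C A A) (tcoalg C B A w A w) d \<and>
     is_coalg_mor C B A w (Unt C) (MK B) e"

section \<open>The symmetric comonoidal monad A (x) - and mixed distributive laws\<close>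

definition muA :: "('o,'a,'c) smcat_scheme \<Rightarrow> 'o \<Rightarrow> 'a \<Rightarrow> 'o \<Rightarrow> 'a" where
  "muA C A mu X = Cmp C (Asc C A A X) (TAr C mu (Idm C X))"

definition etaA :: "('o,'a,'c) smcat_scheme \<Rightarrow> 'a \<Rightarrow> 'o \<Rightarrow> 'a" where
  "etaA C u X = Cmp C (Inv C (LUn C X)) (TAr C u (Idm C X))"

definition nA :: "('o,'a,'c) smcat_scheme \<Rightarrow> 'o \<Rightarrow> 'a \<Rightarrow> 'o \<Rightarrow> 'o \<Rightarrow> 'a" where
  "nA C A d X Y = Cmp C (TAr C d (Idm C (TOb C X Y))) (Tau C A A X Y)"

definition nKA :: "('o,'a,'c) smcat_scheme \<Rightarrow> 'o \<Rightarrow> 'a \<Rightarrow> 'a" where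
  "nKA C A e = Cmp C (RUn C A) e"

text \<open>Outside the objects, lam is required to be undefined (so that lam is determined by its
  components).\<close>
definition is_good_lambda :: "('o,'a,'c) smcat_scheme \<Rightarrow> ('o,'a,'d) smcomonad_scheme \<Rightarrow>
     'o \<Rightarrow> 'a \<Rightarrow> 'a \<Rightarrow> 'a \<Rightarrow> 'a \<Rightarrow> ('o \<Rightarrow> 'a) \<Rightarrow> bool" where
  "is_good_lambda C B A mu u d e lam \<longleftrightarrow>
    (\<forall>X. X \<notin> Obj C \<longrightarrow> lam X = undefined) \<and>
    \<comment> \<open>natural transformation\<close>
    (\<forall>X\<in>Obj C. lam X \<in> Hom C (TOb C A (BOb B X)) (BOb B (TOb C A X))) \<and>
    (\<forall>f\<in>Arr C. Cmp C (TAr C (Idm C A) (BAr B f)) (lam (Tgt C f))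
              = Cmp C (lam (Src C f)) (BAr B (TAr C (Idm C A) f))) \<and>
    \<comment> \<open>mixed distributive law\<close>
    (\<forall>X\<in>Obj C.
       Cmp C (muA C A mu (BOb B X)) (lam X)
         = Cmp C (Cmp C (TAr C (Idm C A) (lam X)) (lam (TOb C A X))) (BAr B (muA C A mu X)) \<and>
       Cmp C (etaA C u (BOb B X)) (lam X) = BAr B (etaA C u X) \<and>
       Cmp C (Cmp C (TAr C (Idm C A) (Dl B X)) (lam (BOb B X))) (BAr B (lam X))
         = Cmp C (lam X) (Dl B (TOb C A X)) \<and>
       Cmp C (lam X) (Ep B (TOb C A X)) = TAr C (Idm C A) (Ep B X)) \<and>
    \<comment> \<open>symmetric monoidal\<close>
    (\<forall>X\<in>Obj C. \<forall>Y\<in>Obj C.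
       Cmp C (Cmp C (nA C A d (BOb B X) (BOb B Y)) (TAr C (lam X) (lam Y))) (Mm B (TOb C A X) (TOb C A Y))
         = Cmp C (Cmp C (TAr C (Idm C A) (Mm B X Y)) (lam (TOb C X Y))) (BAr B (nA C A d X Y))) \<and>
    Cmp C (nKA C A e) (MK B)
      = Cmp C (Cmp C (TAr C (Idm C A) (MK B)) (lam (Unt C))) (BAr B (nKA C A e)) \<and>
    \<comment> \<open>extra compatibility with the associator\<close>
    (\<forall>X\<in>Obj C. \<forall>Y\<in>Obj C.
       Cmp C (Cmp C (Asc C A (BOb B X) (BOb B Y)) (TAr C (lam X) (Idm C (BOb B Y)))) (Mm B (TOb C A X) Y)
         = Cmp C (Cmp C (TAr C (Idm C A) (Mm B X Y)) (lam (TOb C X Y))) (BAr B (Asc C A X Y)))"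

end

theory Submission
  imports Defs
begin


locale smcm =
  fixes C :: "('o,'a) smcat" and B :: "('o,'a) smcomonad"
  assumes smc: "is_smc C" and cmd: "is_sm_comonad C B"
begin

abbreviation cmp (infixr "\<Zcomp>" 55) where "f \<Zcomp> g \<equiv> Cmp C f g"
abbreviation tar (infixr "\<otimes>" 60) where "f \<otimes> g \<equiv> TAr C f g"
abbreviation tob (infixr "\<odot>" 65) where "X \<odot> Y \<equiv> TOb C X Y"
abbreviation "ii X \<equiv> Idm C X"
abbreviation "bo X \<equiv> BOb B X"
abbreviation "ba f \<equiv> BAr B f"
abbreviation "KK \<equiv> Unt C"
abbreviation "al X Y Z \<equiv> Asc C X Y Z"
abbreviation "ali X Y Z \<equiv> Inv C (Asc C X Y Z)"
abbreviation "lu X \<equiv> LUn C X"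
abbreviation "lui X \<equiv> Inv C (LUn C X)"
abbreviation "ru X \<equiv> RUn C X"
abbreviation "rui X \<equiv> Inv C (RUn C X)"
abbreviation "sw X Y \<equiv> Swp C X Y"
abbreviation "mm X Y \<equiv> Mm B X Y"
abbreviation "mk \<equiv> MK B"
abbreviation "dl X \<equiv> Dl B X"
abbreviation "ep X \<equiv> Ep B X"
abbreviation "Ob X \<equiv> X \<in> Obj C"
abbreviation "Ar f \<equiv> f \<in> Arr C"
abbreviation "sr f \<equiv> Src C f"
abbreviation "tg f \<equiv> Tgt C f"

lemmas S0 = smc[unfolded is_smc_def, THEN conjunct1]
lemmas S1 = smc[unfolded is_smc_def, THEN conjunct2, THEN conjunct1]
lemmas S2 = smc[unfolded is_smc_def, THEN conjunct2, THEN conjunct2, THEN conjunct1]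
lemmas S3 = smc[unfolded is_smc_def, THEN conjunct2, THEN conjunct2, THEN conjunct2, THEN conjunct1]
lemmas S4 = smc[unfolded is_smc_def, THEN conjunct2, THEN conjunct2, THEN conjunct2, THEN conjunct2, THEN conjunct1]
lemmas S5 = smc[unfolded is_smc_def, THEN conjunct2, THEN conjunct2, THEN conjunct2, THEN conjunct2, THEN conjunct2, THEN conjunct1]
lemmas S6 = smc[unfolded is_smc_def, THEN conjunct2, THEN conjunct2, THEN conjunct2, THEN conjunct2, THEN conjunct2, THEN conjunct2, THEN conjunct1]
lemmas S7 = smc[unfolded is_smc_def, THEN conjunct2, THEN conjunct2, THEN conjunct2, THEN conjunct2, THEN conjunct2, THEN conjunct2, THEN conjunct2, THEN conjunct1]
lemmas S8 = smc[unfolded is_smc_def, THEN conjunct2, THEN conjunct2, THEN conjunct2, THEN conjunct2, THEN conjunct2, THEN conjunct2, THEN conjunct2, THEN conjunct2, THEN conjunct1]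
lemmas S9 = smc[unfolded is_smc_def, THEN conjunct2, THEN conjunct2, THEN conjunct2, THEN conjunct2, THEN conjunct2, THEN conjunct2, THEN conjunct2, THEN conjunct2, THEN conjunct2, THEN conjunct1]
lemmas S10 = smc[unfolded is_smc_def, THEN conjunct2, THEN conjunct2, THEN conjunct2, THEN conjunct2, THEN conjunct2, THEN conjunct2, THEN conjunct2, THEN conjunct2, THEN conjunct2, THEN conjunct2, THEN conjunct1]
lemmas S11 = smc[unfolded is_smc_def, THEN conjunct2, THEN conjunct2, THEN conjunct2, THEN conjunct2, THEN conjunct2, THEN conjunct2, THEN conjunct2, THEN conjunct2, THEN conjunct2, THEN conjunct2, THEN conjunct2, THEN conjunct1]
lemmas S12 = smc[unfolded is_smc_def, THEN conjunct2, THEN conjunct2, THEN conjunct2, THEN conjunct2, THEN conjunct2, THEN conjunct2, THEN conjunct2, THEN conjunct2, THEN conjunct2, THEN conjunct2, THEN conjunct2, THEN conjunct2, THEN conjunct1]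
lemmas S13 = smc[unfolded is_smc_def, THEN conjunct2, THEN conjunct2, THEN conjunct2, THEN conjunct2, THEN conjunct2, THEN conjunct2, THEN conjunct2, THEN conjunct2, THEN conjunct2, THEN conjunct2, THEN conjunct2, THEN conjunct2, THEN conjunct2, THEN conjunct1]
lemmas S14 = smc[unfolded is_smc_def, THEN conjunct2, THEN conjunct2, THEN conjunct2, THEN conjunct2, THEN conjunct2, THEN conjunct2, THEN conjunct2, THEN conjunct2, THEN conjunct2, THEN conjunct2, THEN conjunct2, THEN conjunct2, THEN conjunct2, THEN conjunct2, THEN conjunct1]
lemmas S15 = smc[unfolded is_smc_def, THEN conjunct2, THEN conjunct2, THEN conjunct2, THEN conjunct2, THEN conjunct2, THEN conjunct2, THEN conjunct2, THEN conjunct2, THEN conjunct2, THEN conjunct2, THEN conjunct2, THEN conjunct2, THEN conjunct2, THEN conjunct2, THEN conjunct2, THEN conjunct1]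
lemmas S16 = smc[unfolded is_smc_def, THEN conjunct2, THEN conjunct2, THEN conjunct2, THEN conjunct2, THEN conjunct2, THEN conjunct2, THEN conjunct2, THEN conjunct2, THEN conjunct2, THEN conjunct2, THEN conjunct2, THEN conjunct2, THEN conjunct2, THEN conjunct2, THEN conjunct2, THEN conjunct2]
lemmas M0 = cmd[unfolded is_sm_comonad_def, THEN conjunct1]
lemmas M1 = cmd[unfolded is_sm_comonad_def, THEN conjunct2, THEN conjunct1]
lemmas M2 = cmd[unfolded is_sm_comonad_def, THEN conjunct2, THEN conjunct2, THEN conjunct1]
lemmas M3 = cmd[unfolded is_sm_comonad_def, THEN conjunct2, THEN conjunct2, THEN conjunct2, THEN conjunct1]
lemmas M4 = cmd[unfolded is_sm_comonad_def, THEN conjunct2, THEN conjunct2, THEN conjunct2, THEN conjunct2, THEN conjunct1]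
lemmas M5 = cmd[unfolded is_sm_comonad_def, THEN conjunct2, THEN conjunct2, THEN conjunct2, THEN conjunct2, THEN conjunct2, THEN conjunct1]
lemmas M6 = cmd[unfolded is_sm_comonad_def, THEN conjunct2, THEN conjunct2, THEN conjunct2, THEN conjunct2, THEN conjunct2, THEN conjunct2, THEN conjunct1]
lemmas M7 = cmd[unfolded is_sm_comonad_def, THEN conjunct2, THEN conjunct2, THEN conjunct2, THEN conjunct2, THEN conjunct2, THEN conjunct2, THEN conjunct2, THEN conjunct1]
lemmas M8 = cmd[unfolded is_sm_comonad_def, THEN conjunct2, THEN conjunct2, THEN conjunct2, THEN conjunct2, THEN conjunct2, THEN conjunct2, THEN conjunct2, THEN conjunct2, THEN conjunct1]
lemmas M9 = cmd[unfolded is_sm_comonad_def, THEN conjunct2, THEN conjunct2, THEN conjunct2, THEN conjunct2, THEN conjunct2, THEN conjunct2, THEN conjunct2, THEN conjunct2, THEN conjunct2, THEN conjunct1]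
lemmas M10 = cmd[unfolded is_sm_comonad_def, THEN conjunct2, THEN conjunct2, THEN conjunct2, THEN conjunct2, THEN conjunct2, THEN conjunct2, THEN conjunct2, THEN conjunct2, THEN conjunct2, THEN conjunct2, THEN conjunct1]
lemmas M11 = cmd[unfolded is_sm_comonad_def, THEN conjunct2, THEN conjunct2, THEN conjunct2, THEN conjunct2, THEN conjunct2, THEN conjunct2, THEN conjunct2, THEN conjunct2, THEN conjunct2, THEN conjunct2, THEN conjunct2, THEN conjunct1]
lemmas M12 = cmd[unfolded is_sm_comonad_def, THEN conjunct2, THEN conjunct2, THEN conjunct2, THEN conjunct2, THEN conjunct2, THEN conjunct2, THEN conjunct2, THEN conjunct2, THEN conjunct2, THEN conjunct2, THEN conjunct2, THEN conjunct2, THEN conjunct1]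
lemmas M13 = cmd[unfolded is_sm_comonad_def, THEN conjunct2, THEN conjunct2, THEN conjunct2, THEN conjunct2, THEN conjunct2, THEN conjunct2, THEN conjunct2, THEN conjunct2, THEN conjunct2, THEN conjunct2, THEN conjunct2, THEN conjunct2, THEN conjunct2, THEN conjunct1]
lemmas M14 = cmd[unfolded is_sm_comonad_def, THEN conjunct2, THEN conjunct2, THEN conjunct2, THEN conjunct2, THEN conjunct2, THEN conjunct2, THEN conjunct2, THEN conjunct2, THEN conjunct2, THEN conjunct2, THEN conjunct2, THEN conjunct2, THEN conjunct2, THEN conjunct2, THEN conjunct1]
lemmas M15 = cmd[unfolded is_sm_comonad_def, THEN conjunct2, THEN conjunct2, THEN conjunct2, THEN conjunct2, THEN conjunct2, THEN conjunct2, THEN conjunct2, THEN conjunct2, THEN conjunct2, THEN conjunct2, THEN conjunct2, THEN conjunct2, THEN conjunct2, THEN conjunct2, THEN conjunct2, THEN conjunct1]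
lemmas M16 = cmd[unfolded is_sm_comonad_def, THEN conjunct2, THEN conjunct2, THEN conjunct2, THEN conjunct2, THEN conjunct2, THEN conjunct2, THEN conjunct2, THEN conjunct2, THEN conjunct2, THEN conjunct2, THEN conjunct2, THEN conjunct2, THEN conjunct2, THEN conjunct2, THEN conjunct2, THEN conjunct2]
lemmas Ca0 = S0[unfolded is_category_def, THEN conjunct1]
lemmas Ca1 = S0[unfolded is_category_def, THEN conjunct2, THEN conjunct1]
lemmas Ca2 = S0[unfolded is_category_def, THEN conjunct2, THEN conjunct2, THEN conjunct1]
lemmas Ca3 = S0[unfolded is_category_def, THEN conjunct2, THEN conjunct2, THEN conjunct2, THEN conjunct1]
lemmas Ca4 = S0[unfolded is_category_def, THEN conjunct2, THEN conjunct2, THEN conjunct2, THEN conjunct2]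

lemma hom_iff: "f \<in> Hom C X Y \<longleftrightarrow> Ar f \<and> sr f = X \<and> tg f = Y" unfolding Hom_def by blast

lemma obj_src[simp]: "Ar f \<Longrightarrow> Ob (sr f)" and obj_tgt[simp]: "Ar f \<Longrightarrow> Ob (tg f)"
  using Ca0 Ca1 Ca2 Ca3 Ca4 by blast+

lemma idm_ty[simp]: "Ob X \<Longrightarrow> Ar (ii X)" "Ob X \<Longrightarrow> sr (ii X) = X" "Ob X \<Longrightarrow> tg (ii X) = X"
  using Ca0 Ca1 Ca2 Ca3 Ca4 hom_iff by blast+

lemma cmp_ty[simp]:
  "Ar f \<Longrightarrow> Ar g \<Longrightarrow> tg f = sr g \<Longrightarrow> Ar (f \<Zcomp> g)"
  "Ar f \<Longrightarrow> Ar g \<Longrightarrow> tg f = sr g \<Longrightarrow> sr (f \<Zcomp> g) = sr f"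
  "Ar f \<Longrightarrow> Ar g \<Longrightarrow> tg f = sr g \<Longrightarrow> tg (f \<Zcomp> g) = tg g"
  using Ca0 Ca1 Ca2 Ca3 Ca4 hom_iff by blast+

lemma cmp_assoc[simp]:
  "Ar f \<Longrightarrow> Ar g \<Longrightarrow> Ar h \<Longrightarrow> tg f = sr g \<Longrightarrow> tg g = sr h \<Longrightarrow> (f \<Zcomp> g) \<Zcomp> h = f \<Zcomp> (g \<Zcomp> h)"
  using Ca0 Ca1 Ca2 Ca3 Ca4 by blast

lemma idm_l[simp]: "Ar f \<Longrightarrow> sr f = X \<Longrightarrow> ii X \<Zcomp> f = f"
  and idm_r[simp]: "Ar f \<Longrightarrow> tg f = X \<Longrightarrow> f \<Zcomp> ii X = f"
  using Ca0 Ca1 Ca2 Ca3 Ca4 by blast+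

lemma unt_obj[simp]: "Ob KK" using S1 by blast
lemma tob_obj[simp]: "Ob X \<Longrightarrow> Ob Y \<Longrightarrow> Ob (X \<odot> Y)" using S2 by blast

lemma tar_ty[simp]:
  "Ar f \<Longrightarrow> Ar g \<Longrightarrow> Ar (f \<otimes> g)"
  "Ar f \<Longrightarrow> Ar g \<Longrightarrow> sr (f \<otimes> g) = sr f \<odot> sr g"
  "Ar f \<Longrightarrow> Ar g \<Longrightarrow> tg (f \<otimes> g) = tg f \<odot> tg g"
  using S3 unfolding hom_iff by blast+

lemma tar_idm[simp]: "Ob X \<Longrightarrow> Ob Y \<Longrightarrow> ii X \<otimes> ii Y = ii (X \<odot> Y)"
  using S4 by blast

lemma tar_cmp: "Ar f \<Longrightarrow> Ar g \<Longrightarrow> Ar f' \<Longrightarrow> Ar g' \<Longrightarrow> tg f = sr g \<Longrightarrow> tg f' = sr g' \<Longrightarrow>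
   (f \<Zcomp> g) \<otimes> (f' \<Zcomp> g') = (f \<otimes> f') \<Zcomp> (g \<otimes> g')"
  using S5 by blast

lemma tar_merge[simp]: "Ar f \<Longrightarrow> Ar g \<Longrightarrow> Ar f' \<Longrightarrow> Ar g' \<Longrightarrow> tg f = sr g \<Longrightarrow> tg f' = sr g' \<Longrightarrow>
   (f \<otimes> f') \<Zcomp> (g \<otimes> g') = (f \<Zcomp> g) \<otimes> (f' \<Zcomp> g')"
  using tar_cmp by simp

lemma tar_merge2[simp]: "Ar f \<Longrightarrow> Ar g \<Longrightarrow> Ar f' \<Longrightarrow> Ar g' \<Longrightarrow> Ar r \<Longrightarrow> tg f = sr g \<Longrightarrow> tg f' = sr g' \<Longrightarrow>
   tg g \<odot> tg g' = sr r \<Longrightarrow>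
   (f \<otimes> f') \<Zcomp> ((g \<otimes> g') \<Zcomp> r) = ((f \<Zcomp> g) \<otimes> (f' \<Zcomp> g')) \<Zcomp> r"
proof -
  assume a: "Ar f" "Ar g" "Ar f'" "Ar g'" "Ar r" "tg f = sr g" "tg f' = sr g'" "tg g \<odot> tg g' = sr r"
  have "(f \<otimes> f') \<Zcomp> ((g \<otimes> g') \<Zcomp> r) = ((f \<otimes> f') \<Zcomp> (g \<otimes> g')) \<Zcomp> r"
    using a by (subst cmp_assoc) auto
  then show ?thesis using a by simp
qed

lemma tar_ar: "Ar f \<Longrightarrow> Ar g \<Longrightarrow> Ar (f \<otimes> g)" by simp

lemma inv_ok:
  assumes "is_iso C f"
  shows "Inv C f \<in> Hom C (tg f) (sr f) \<and> f \<Zcomp> Inv C f = ii (sr f) \<and> Inv C f \<Zcomp> f = ii (tg f)"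
proof -
  from assms obtain g where g: "g \<in> Hom C (tg f) (sr f)" "f \<Zcomp> g = ii (sr f)" "g \<Zcomp> f = ii (tg f)"
    and f: "Ar f" unfolding is_iso_def by blast
  have uniq: "g' = g" if "g' \<in> Hom C (tg f) (sr f)" "f \<Zcomp> g' = ii (sr f)" "g' \<Zcomp> f = ii (tg f)" for g'
  proof -
    have "g' = g' \<Zcomp> ii (sr f)" using that unfolding hom_iff by simp
    also have "\<dots> = g' \<Zcomp> (f \<Zcomp> g)" using g by simp
    also have "\<dots> = (g' \<Zcomp> f) \<Zcomp> g" using g that f unfolding hom_iff by (intro cmp_assoc[symmetric]) auto
    also have "\<dots> = ii (tg f) \<Zcomp> g" using that by simp
    also have "\<dots> = g" using g unfolding hom_iff by simp
    finally show ?thesis .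
  qed
  have "Inv C f = g" unfolding Inv_def
    by (rule the_equality) (use g uniq in blast)+
  with g show ?thesis by simp
qed

lemma al_iso: "Ob X \<Longrightarrow> Ob Y \<Longrightarrow> Ob Z \<Longrightarrow> al X Y Z \<in> Hom C (X \<odot> (Y \<odot> Z)) ((X \<odot> Y) \<odot> Z) \<and> is_iso C (al X Y Z)"
  using S6 by blast
lemma lu_iso: "Ob X \<Longrightarrow> lu X \<in> Hom C (KK \<odot> X) X \<and> is_iso C (lu X)" using S8 by blast
lemma ru_iso: "Ob X \<Longrightarrow> ru X \<in> Hom C (X \<odot> KK) X \<and> is_iso C (ru X)" using S10 by blast

lemma al_ty[simp]: assumes "Ob X" "Ob Y" "Ob Z"
  shows "Ar (al X Y Z)" "sr (al X Y Z) = X \<odot> (Y \<odot> Z)" "tg (al X Y Z) = (X \<odot> Y) \<odot> Z"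
    "Ar (ali X Y Z)" "sr (ali X Y Z) = (X \<odot> Y) \<odot> Z" "tg (ali X Y Z) = X \<odot> (Y \<odot> Z)"
  using al_iso[OF assms] inv_ok[of "al X Y Z"] unfolding hom_iff by auto
lemma lu_ty[simp]: assumes "Ob X"
  shows "Ar (lu X)" "sr (lu X) = KK \<odot> X" "tg (lu X) = X" "Ar (lui X)" "sr (lui X) = X" "tg (lui X) = KK \<odot> X"
  using lu_iso[OF assms] inv_ok[of "lu X"] unfolding hom_iff by auto
lemma ru_ty[simp]: assumes "Ob X"
  shows "Ar (ru X)" "sr (ru X) = X \<odot> KK" "tg (ru X) = X" "Ar (rui X)" "sr (rui X) = X" "tg (rui X) = X \<odot> KK"
  using ru_iso[OF assms] inv_ok[of "ru X"] unfolding hom_iff by auto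

lemma al_inv[simp]: assumes "Ob X" "Ob Y" "Ob Z"
  shows "al X Y Z \<Zcomp> ali X Y Z = ii (X \<odot> (Y \<odot> Z))" "ali X Y Z \<Zcomp> al X Y Z = ii ((X \<odot> Y) \<odot> Z)"
  using al_iso[OF assms] inv_ok[of "al X Y Z"] unfolding hom_iff by auto
lemma lu_inv[simp]: assumes "Ob X" shows "lu X \<Zcomp> lui X = ii (KK \<odot> X)" "lui X \<Zcomp> lu X = ii X"
  using lu_iso[OF assms] inv_ok[of "lu X"] unfolding hom_iff by auto
lemma ru_inv[simp]: assumes "Ob X" shows "ru X \<Zcomp> rui X = ii (X \<odot> KK)" "rui X \<Zcomp> ru X = ii X"
  using ru_iso[OF assms] inv_ok[of "ru X"] unfolding hom_iff by auto

lemma ctx: "p \<Zcomp> q = s \<Longrightarrow> Ar p \<Longrightarrow> Ar q \<Longrightarrow> Ar r \<Longrightarrow> tg p = sr q \<Longrightarrow> tg q = sr r \<Longrightarrow> p \<Zcomp> (q \<Zcomp> r) = s \<Zcomp> r"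
  by (metis cmp_assoc)

lemma al_inv2[simp]: assumes "Ob X" "Ob Y" "Ob Z" "Ar r"
  shows "sr r = X \<odot> (Y \<odot> Z) \<Longrightarrow> al X Y Z \<Zcomp> (ali X Y Z \<Zcomp> r) = r"
  by (subst cmp_assoc[symmetric]) (use assms in auto)
lemma ali_inv2[simp]: assumes "Ob X" "Ob Y" "Ob Z" "Ar r"
  shows "sr r = (X \<odot> Y) \<odot> Z \<Longrightarrow> ali X Y Z \<Zcomp> (al X Y Z \<Zcomp> r) = r"
  by (subst cmp_assoc[symmetric]) (use assms in auto)
lemma lu_inv2[simp]: assumes "Ob X" "Ar r"
  shows "sr r = KK \<odot> X \<Longrightarrow> lu X \<Zcomp> (lui X \<Zcomp> r) = r"
  by (subst cmp_assoc[symmetric]) (use assms in auto)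
lemma lui_inv2[simp]: assumes "Ob X" "Ar r"
  shows "sr r = X \<Longrightarrow> lui X \<Zcomp> (lu X \<Zcomp> r) = r"
  by (subst cmp_assoc[symmetric]) (use assms in auto)
lemma ru_inv2[simp]: assumes "Ob X" "Ar r"
  shows "sr r = X \<odot> KK \<Longrightarrow> ru X \<Zcomp> (rui X \<Zcomp> r) = r"
  by (subst cmp_assoc[symmetric]) (use assms in auto)
lemma rui_inv2[simp]: assumes "Ob X" "Ar r"
  shows "sr r = X \<Longrightarrow> rui X \<Zcomp> (ru X \<Zcomp> r) = r"
  by (subst cmp_assoc[symmetric]) (use assms in auto)

lemma sw_ty[simp]: assumes "Ob X" "Ob Y" shows "Ar (sw X Y)" "sr (sw X Y) = X \<odot> Y" "tg (sw X Y) = Y \<odot> X"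
  using S12 assms unfolding hom_iff by blast+
lemma sw_inv[simp]: "Ob X \<Longrightarrow> Ob Y \<Longrightarrow> sw X Y \<Zcomp> sw Y X = ii (X \<odot> Y)" using S12 by blast

lemma bo_obj[simp]: "Ob X \<Longrightarrow> Ob (bo X)" using M0 by blast
lemma ba_ty[simp]: "Ar f \<Longrightarrow> Ar (ba f)" "Ar f \<Longrightarrow> sr (ba f) = bo (sr f)" "Ar f \<Longrightarrow> tg (ba f) = bo (tg f)"
  using M1 unfolding hom_iff by blast+
lemma ba_idm[simp]: "Ob X \<Longrightarrow> ba (ii X) = ii (bo X)" using M2 by blast
lemma ba_cmp: "Ar f \<Longrightarrow> Ar g \<Longrightarrow> tg f = sr g \<Longrightarrow> ba (f \<Zcomp> g) = ba f \<Zcomp> ba g" using M3 by blast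
lemma ba_merge[simp]: "Ar f \<Longrightarrow> Ar g \<Longrightarrow> tg f = sr g \<Longrightarrow> ba f \<Zcomp> ba g = ba (f \<Zcomp> g)" using ba_cmp by simp
lemma ba_merge2[simp]: "Ar f \<Longrightarrow> Ar g \<Longrightarrow> Ar r \<Longrightarrow> tg f = sr g \<Longrightarrow> bo (tg g) = sr r \<Longrightarrow> ba f \<Zcomp> (ba g \<Zcomp> r) = ba (f \<Zcomp> g) \<Zcomp> r"
  by (subst cmp_assoc[symmetric]) simp_all

lemma dl_ty[simp]: assumes "Ob X" shows "Ar (dl X)" "sr (dl X) = bo X" "tg (dl X) = bo (bo X)"
  using M4 assms unfolding hom_iff by blast+
lemma ep_ty[simp]: assumes "Ob X" shows "Ar (ep X)" "sr (ep X) = bo X" "tg (ep X) = X"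
  using M4 assms unfolding hom_iff by blast+
lemma mm_ty[simp]: assumes "Ob X" "Ob Y" shows "Ar (mm X Y)" "sr (mm X Y) = bo X \<odot> bo Y" "tg (mm X Y) = bo (X \<odot> Y)"
  using M8 assms unfolding hom_iff by blast+
lemma mk_ty[simp]: "Ar mk" "sr mk = KK" "tg mk = bo KK"
  using M9 unfolding hom_iff by blast+

lemma al_nat: "Ar f \<Longrightarrow> Ar g \<Longrightarrow> Ar h \<Longrightarrow> (f \<otimes> (g \<otimes> h)) \<Zcomp> al (tg f) (tg g) (tg h) = al (sr f) (sr g) (sr h) \<Zcomp> ((f \<otimes> g) \<otimes> h)"
  using S7 by blast
lemma lu_nat: "Ar f \<Longrightarrow> (ii KK \<otimes> f) \<Zcomp> lu (tg f) = lu (sr f) \<Zcomp> f" using S9 by blast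
lemma ru_nat: "Ar f \<Longrightarrow> (f \<otimes> ii KK) \<Zcomp> ru (tg f) = ru (sr f) \<Zcomp> f" using S11 by blast
lemma sw_nat: "Ar f \<Longrightarrow> Ar g \<Longrightarrow> (f \<otimes> g) \<Zcomp> sw (tg f) (tg g) = sw (sr f) (sr g) \<Zcomp> (g \<otimes> f)" using S13 by blast
lemma triangle: "Ob X \<Longrightarrow> Ob Y \<Longrightarrow> al X KK Y \<Zcomp> (ru X \<otimes> ii Y) = ii X \<otimes> lu Y" using S15 by blast

lemma mm_nat: "Ar f \<Longrightarrow> Ar g \<Longrightarrow> (ba f \<otimes> ba g) \<Zcomp> mm (tg f) (tg g) = mm (sr f) (sr g) \<Zcomp> ba (f \<otimes> g)"
  using M10 by blast
lemma dl_nat: "Ar f \<Longrightarrow> ba f \<Zcomp> dl (tg f) = dl (sr f) \<Zcomp> ba (ba f)" using M5 by blast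
lemma ep_nat: "Ar f \<Longrightarrow> ba f \<Zcomp> ep (tg f) = ep (sr f) \<Zcomp> f" using M6 by blast
lemma comonad: assumes "Ob X" shows "dl X \<Zcomp> ep (bo X) = ii (bo X)" "dl X \<Zcomp> ba (ep X) = ii (bo X)"
  "dl X \<Zcomp> dl (bo X) = dl X \<Zcomp> ba (dl X)" using M7 assms by blast+
lemma mm_assoc: "Ob X \<Longrightarrow> Ob Y \<Longrightarrow> Ob Z \<Longrightarrow>
  ((ii (bo X) \<otimes> mm Y Z) \<Zcomp> mm X (Y \<odot> Z)) \<Zcomp> ba (al X Y Z) = (al (bo X) (bo Y) (bo Z) \<Zcomp> (mm X Y \<otimes> ii (bo Z))) \<Zcomp> mm (X \<odot> Y) Z"
  using M11 by blast
lemma mm_unit: assumes "Ob X" shows "((mk \<otimes> ii (bo X)) \<Zcomp> mm KK X) \<Zcomp> ba (lu X) = lu (bo X)"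
  "((ii (bo X) \<otimes> mk) \<Zcomp> mm X KK) \<Zcomp> ba (ru X) = ru (bo X)" using M12 assms by blast+
lemma mm_sym: "Ob X \<Longrightarrow> Ob Y \<Longrightarrow> mm X Y \<Zcomp> ba (sw X Y) = sw (bo X) (bo Y) \<Zcomp> mm Y X" using M13 by blast
lemma mm_dl: "Ob X \<Longrightarrow> Ob Y \<Longrightarrow> mm X Y \<Zcomp> dl (X \<odot> Y) = ((dl X \<otimes> dl Y) \<Zcomp> mm (bo X) (bo Y)) \<Zcomp> ba (mm X Y)"
  using M14 by blast
lemma mm_ep: "Ob X \<Longrightarrow> Ob Y \<Longrightarrow> mm X Y \<Zcomp> ep (X \<odot> Y) = ep X \<otimes> ep Y" using M14 by blast
lemma mk_dl: "mk \<Zcomp> dl KK = mk \<Zcomp> ba mk" using M15 by blast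
lemma mk_ep: "mk \<Zcomp> ep KK = ii KK" using M16 by blast

lemmas ty = obj_src obj_tgt idm_ty cmp_ty unt_obj tob_obj tar_ty al_ty lu_ty ru_ty sw_ty bo_obj ba_ty dl_ty ep_ty mm_ty mk_ty

abbreviation "HH f X Y \<equiv> Ar f \<and> sr f = X \<and> tg f = Y"

lemma al_nat': "HH f X X' \<Longrightarrow> HH g Y Y' \<Longrightarrow> HH h Z Z' \<Longrightarrow>
   (f \<otimes> (g \<otimes> h)) \<Zcomp> al X' Y' Z' = al X Y Z \<Zcomp> ((f \<otimes> g) \<otimes> h)"
  using al_nat by blast
lemma lu_nat': "HH f X X' \<Longrightarrow> (ii KK \<otimes> f) \<Zcomp> lu X' = lu X \<Zcomp> f" using lu_nat by blast
lemma ru_nat': "HH f X X' \<Longrightarrow> (f \<otimes> ii KK) \<Zcomp> ru X' = ru X \<Zcomp> f" using ru_nat by blast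
lemma sw_nat': "HH f X X' \<Longrightarrow> HH g Y Y' \<Longrightarrow> (f \<otimes> g) \<Zcomp> sw X' Y' = sw X Y \<Zcomp> (g \<otimes> f)" using sw_nat by blast
lemma mm_nat': "HH f X X' \<Longrightarrow> HH g Y Y' \<Longrightarrow> (ba f \<otimes> ba g) \<Zcomp> mm X' Y' = mm X Y \<Zcomp> ba (f \<otimes> g)"
  using mm_nat by blast
lemma dl_nat': "HH f X X' \<Longrightarrow> ba f \<Zcomp> dl X' = dl X \<Zcomp> ba (ba f)" using dl_nat by blast
lemma ep_nat': "HH f X X' \<Longrightarrow> ba f \<Zcomp> ep X' = ep X \<Zcomp> f" using ep_nat by blast

lemma ali_nat': assumes "HH f X X'" "HH g Y Y'" "HH h Z Z'"
  shows "((f \<otimes> g) \<otimes> h) \<Zcomp> ali X' Y' Z' = ali X Y Z \<Zcomp> (f \<otimes> (g \<otimes> h))"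
proof -
  have [simp]: "Ob X" "Ob Y" "Ob Z" "Ob X'" "Ob Y'" "Ob Z'" using assms by (metis obj_src obj_tgt)+
  have "((f \<otimes> g) \<otimes> h) \<Zcomp> ali X' Y' Z' = ali X Y Z \<Zcomp> (al X Y Z \<Zcomp> ((f \<otimes> g) \<otimes> h)) \<Zcomp> ali X' Y' Z'"
    using assms by simp
  also have "\<dots> = ali X Y Z \<Zcomp> ((f \<otimes> (g \<otimes> h)) \<Zcomp> al X' Y' Z') \<Zcomp> ali X' Y' Z'"
    by (subst al_nat'[OF assms]) (rule refl)
  also have "\<dots> = ali X Y Z \<Zcomp> (f \<otimes> (g \<otimes> h))"
    using assms by simp
  finally show ?thesis .
qed

lemma HH_ob: "HH f X Y \<Longrightarrow> Ob X \<and> Ob Y" by (metis obj_src obj_tgt)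

end


context smcm begin
lemma mm_assoc': assumes "Ob X" "Ob Y" "Ob Z"
  shows "(ii (bo X) \<otimes> mm Y Z) \<Zcomp> mm X (Y \<odot> Z) \<Zcomp> ba (al X Y Z) = al (bo X) (bo Y) (bo Z) \<Zcomp> (mm X Y \<otimes> ii (bo Z)) \<Zcomp> mm (X \<odot> Y) Z"
  using mm_assoc[OF assms] assms by simp

lemma mm_unit_l': "Ob X \<Longrightarrow> (mk \<otimes> ii (bo X)) \<Zcomp> mm KK X \<Zcomp> ba (lu X) = lu (bo X)"
  using mm_unit(1)[of X] by simp
lemma mm_unit_r': "Ob X \<Longrightarrow> (ii (bo X) \<otimes> mk) \<Zcomp> mm X KK \<Zcomp> ba (ru X) = ru (bo X)"
  using mm_unit(2)[of X] by simp
lemma mm_dl': "Ob X \<Longrightarrow> Ob Y \<Longrightarrow> mm X Y \<Zcomp> dl (X \<odot> Y) = (dl X \<otimes> dl Y) \<Zcomp> mm (bo X) (bo Y) \<Zcomp> ba (mm X Y)"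
  using mm_dl[of X Y] by simp

lemma mm_assoc_inv: assumes X: "Ob X" "Ob Y" "Ob Z"
  shows "ali (bo X) (bo Y) (bo Z) \<Zcomp> (ii (bo X) \<otimes> mm Y Z) \<Zcomp> mm X (Y \<odot> Z)
       = (mm X Y \<otimes> ii (bo Z)) \<Zcomp> mm (X \<odot> Y) Z \<Zcomp> ba (ali X Y Z)"
proof -
  have "ali (bo X) (bo Y) (bo Z) \<Zcomp> (ii (bo X) \<otimes> mm Y Z) \<Zcomp> mm X (Y \<odot> Z)
     = ali (bo X) (bo Y) (bo Z) \<Zcomp> ((ii (bo X) \<otimes> mm Y Z) \<Zcomp> mm X (Y \<odot> Z) \<Zcomp> ba (al X Y Z)) \<Zcomp> ba (ali X Y Z)"
    using X by simp
  also have "\<dots> = ali (bo X) (bo Y) (bo Z) \<Zcomp> (al (bo X) (bo Y) (bo Z) \<Zcomp> (mm X Y \<otimes> ii (bo Z)) \<Zcomp> mm (X \<odot> Y) Z) \<Zcomp> ba (ali X Y Z)"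
    by (subst mm_assoc') (use X in simp_all)
  also have "\<dots> = (mm X Y \<otimes> ii (bo Z)) \<Zcomp> mm (X \<odot> Y) Z \<Zcomp> ba (ali X Y Z)"
    using X by simp
  finally show ?thesis .
qed

lemma lu_unit_inv: assumes X: "Ob X"
  shows "lui (bo X) \<Zcomp> (mk \<otimes> ii (bo X)) \<Zcomp> mm KK X = ba (lui X)"
proof -
  have "lui (bo X) \<Zcomp> (mk \<otimes> ii (bo X)) \<Zcomp> mm KK X = lui (bo X) \<Zcomp> ((mk \<otimes> ii (bo X)) \<Zcomp> mm KK X \<Zcomp> ba (lu X)) \<Zcomp> ba (lui X)"
    using X by simp
  also have "\<dots> = lui (bo X) \<Zcomp> lu (bo X) \<Zcomp> ba (lui X)"
    by (subst mm_unit_l') (use X in simp_all)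
  also have "\<dots> = ba (lui X)" using X by simp
  finally show ?thesis .
qed

lemma Tau_ty[simp]: assumes "Ob P" "Ob Q" "Ob R" "Ob S"
  shows "Ar (Tau C P Q R S)" "sr (Tau C P Q R S) = (P \<odot> Q) \<odot> (R \<odot> S)" "tg (Tau C P Q R S) = (P \<odot> R) \<odot> (Q \<odot> S)"
  using assms unfolding Tau_def by simp_all

lemma B3_nat: assumes f: "HH g Q Q'" "HH h R R'" "HH k S S'"
  shows "(g \<otimes> (h \<otimes> k)) \<Zcomp> al Q' R' S' \<Zcomp> (sw Q' R' \<otimes> ii S') \<Zcomp> ali R' Q' S'
       = al Q R S \<Zcomp> (sw Q R \<otimes> ii S) \<Zcomp> ali R Q S \<Zcomp> (h \<otimes> (g \<otimes> k))"
proof -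
  have [simp]: "Ob Q" "Ob R" "Ob S" "Ob Q'" "Ob R'" "Ob S'" using f by (metis obj_src obj_tgt)+
  have "(g \<otimes> (h \<otimes> k)) \<Zcomp> al Q' R' S' \<Zcomp> (sw Q' R' \<otimes> ii S') \<Zcomp> ali R' Q' S'
     = ((g \<otimes> (h \<otimes> k)) \<Zcomp> al Q' R' S') \<Zcomp> (sw Q' R' \<otimes> ii S') \<Zcomp> ali R' Q' S'" using f by simp
  also have "\<dots> = al Q R S \<Zcomp> ((g \<otimes> h) \<otimes> k) \<Zcomp> (sw Q' R' \<otimes> ii S') \<Zcomp> ali R' Q' S'"
    by (subst al_nat'[of g Q Q' h R R' k S S']) (use f in simp_all)
  also have "\<dots> = al Q R S \<Zcomp> (((g \<otimes> h) \<Zcomp> sw Q' R') \<otimes> k) \<Zcomp> ali R' Q' S'"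
    using f by simp
  also have "\<dots> = al Q R S \<Zcomp> (sw Q R \<otimes> ii S) \<Zcomp> (((h \<otimes> g) \<otimes> k) \<Zcomp> ali R' Q' S')"
    by (subst sw_nat'[of g Q Q' h R R']) (use f in simp_all)
  also have "\<dots> = al Q R S \<Zcomp> (sw Q R \<otimes> ii S) \<Zcomp> ali R Q S \<Zcomp> (h \<otimes> (g \<otimes> k))"
    by (subst ali_nat'[of h R R' g Q Q' k S S']) (use f in simp_all)
  finally show ?thesis .
qed

lemma Tau_nat: assumes f: "HH f P P'" "HH g Q Q'" "HH h R R'" "HH k S S'"
  shows "((f \<otimes> g) \<otimes> (h \<otimes> k)) \<Zcomp> Tau C P' Q' R' S' = Tau C P Q R S \<Zcomp> ((f \<otimes> h) \<otimes> (g \<otimes> k))"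
proof -
  have [simp]: "Ob P" "Ob Q" "Ob R" "Ob S" "Ob P'" "Ob Q'" "Ob R'" "Ob S'" using f by (metis obj_src obj_tgt)+
  have "((f \<otimes> g) \<otimes> (h \<otimes> k)) \<Zcomp> Tau C P' Q' R' S'
     = (((f \<otimes> g) \<otimes> (h \<otimes> k)) \<Zcomp> ali P' Q' (R' \<odot> S')) \<Zcomp> (ii P' \<otimes> (al Q' R' S' \<Zcomp> (sw Q' R' \<otimes> ii S') \<Zcomp> ali R' Q' S')) \<Zcomp> al P' R' (Q' \<odot> S')"
    unfolding Tau_def using f by simp
  also have "\<dots> = ali P Q (R \<odot> S) \<Zcomp> (f \<otimes> ((g \<otimes> (h \<otimes> k)) \<Zcomp> al Q' R' S' \<Zcomp> (sw Q' R' \<otimes> ii S') \<Zcomp> ali R' Q' S')) \<Zcomp> al P' R' (Q' \<odot> S')"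
    by (subst ali_nat'[of f P P' g Q Q' "h \<otimes> k" "R \<odot> S" "R' \<odot> S'"]) (use f in simp_all)
  also have "\<dots> = ali P Q (R \<odot> S) \<Zcomp> (ii P \<otimes> (al Q R S \<Zcomp> (sw Q R \<otimes> ii S) \<Zcomp> ali R Q S)) \<Zcomp> ((f \<otimes> (h \<otimes> (g \<otimes> k))) \<Zcomp> al P' R' (Q' \<odot> S'))"
    by (subst B3_nat[of g Q Q' h R R' k S S']) (use f in simp_all)
  also have "\<dots> = ali P Q (R \<odot> S) \<Zcomp> (ii P \<otimes> (al Q R S \<Zcomp> (sw Q R \<otimes> ii S) \<Zcomp> ali R Q S)) \<Zcomp> al P R (Q \<odot> S) \<Zcomp> ((f \<otimes> h) \<otimes> (g \<otimes> k))"
    by (subst al_nat'[of f P P' h R R' "g \<otimes> k" "Q \<odot> S" "Q' \<odot> S'"]) (use f in simp_all)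
  also have "\<dots> = Tau C P Q R S \<Zcomp> ((f \<otimes> h) \<otimes> (g \<otimes> k))"
    unfolding Tau_def using f by simp
  finally show ?thesis .
qed
lemma mm_tau: assumes X: "Ob P" "Ob Q" "Ob R" "Ob S"
  shows "Tau C (bo P) (bo Q) (bo R) (bo S) \<Zcomp> (mm P R \<otimes> mm Q S) \<Zcomp> mm (P \<odot> R) (Q \<odot> S)
       = (mm P Q \<otimes> mm R S) \<Zcomp> mm (P \<odot> Q) (R \<odot> S) \<Zcomp> ba (Tau C P Q R S)"
proof -
  have "(mm P Q \<otimes> mm R S) \<Zcomp> mm (P \<odot> Q) (R \<odot> S) \<Zcomp> ba (Tau C P Q R S)
     = ((ii (bo P) \<otimes> ii (bo Q)) \<otimes> mm R S) \<Zcomp> ((mm P Q \<otimes> ii (bo (R \<odot> S))) \<Zcomp> mm (P \<odot> Q) (R \<odot> S) \<Zcomp> ba (ali P Q (R \<odot> S))) \<Zcomp> ba (ii P \<otimes> al Q R S) \<Zcomp> ba (ii P \<otimes> (sw Q R \<otimes> ii S)) \<Zcomp> ba (ii P \<otimes> ali R Q S) \<Zcomp> ba (al P R (Q \<odot> S))"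
    using X by (simp add: Tau_def)
  also have "\<dots> = (((ii (bo P) \<otimes> ii (bo Q)) \<otimes> mm R S) \<Zcomp> ali (bo P) (bo Q) (bo (R \<odot> S))) \<Zcomp> (ii (bo P) \<otimes> mm Q (R \<odot> S)) \<Zcomp> mm P (Q \<odot> (R \<odot> S)) \<Zcomp> ba (ii P \<otimes> al Q R S) \<Zcomp> ba (ii P \<otimes> (sw Q R \<otimes> ii S)) \<Zcomp> ba (ii P \<otimes> ali R Q S) \<Zcomp> ba (al P R (Q \<odot> S))"
    by (subst mm_assoc_inv[symmetric, of P Q "R \<odot> S"]) (use X in simp_all)
  also have "\<dots> = ali (bo P) (bo Q) (bo R \<odot> bo S) \<Zcomp> (ii (bo P) \<otimes> ((ii (bo Q) \<otimes> mm R S) \<Zcomp> mm Q (R \<odot> S))) \<Zcomp> (mm P (Q \<odot> (R \<odot> S)) \<Zcomp> ba (ii P \<otimes> al Q R S)) \<Zcomp> ba (ii P \<otimes> (sw Q R \<otimes> ii S)) \<Zcomp> ba (ii P \<otimes> ali R Q S) \<Zcomp> ba (al P R (Q \<odot> S))"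
    by (subst ali_nat'[of "ii (bo P)" "bo P" "bo P" "ii (bo Q)" "bo Q" "bo Q" "mm R S" "bo R \<odot> bo S" "bo (R \<odot> S)"]) (use X in simp_all)
  also have "\<dots> = ali (bo P) (bo Q) (bo R \<odot> bo S) \<Zcomp> (ii (bo P) \<otimes> ((ii (bo Q) \<otimes> mm R S) \<Zcomp> mm Q (R \<odot> S) \<Zcomp> ba (al Q R S))) \<Zcomp> (mm P ((Q \<odot> R) \<odot> S) \<Zcomp> ba (ii P \<otimes> (sw Q R \<otimes> ii S))) \<Zcomp> ba (ii P \<otimes> ali R Q S) \<Zcomp> ba (al P R (Q \<odot> S))"
    by (subst mm_nat'[symmetric, of "ii P" P P "al Q R S" "Q \<odot> (R \<odot> S)" "(Q \<odot> R) \<odot> S"]) (use X in simp_all)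
  also have "\<dots> = ali (bo P) (bo Q) (bo R \<odot> bo S) \<Zcomp> (ii (bo P) \<otimes> (al (bo Q) (bo R) (bo S) \<Zcomp> (mm Q R \<otimes> ii (bo S)) \<Zcomp> mm (Q \<odot> R) S)) \<Zcomp> (mm P ((Q \<odot> R) \<odot> S) \<Zcomp> ba (ii P \<otimes> (sw Q R \<otimes> ii S))) \<Zcomp> ba (ii P \<otimes> ali R Q S) \<Zcomp> ba (al P R (Q \<odot> S))"
    by (subst mm_assoc'[of Q R S]) (use X in simp_all)
  also have "\<dots> = ali (bo P) (bo Q) (bo R \<odot> bo S) \<Zcomp> (ii (bo P) \<otimes> (al (bo Q) (bo R) (bo S) \<Zcomp> (mm Q R \<otimes> ii (bo S)) \<Zcomp> (mm (Q \<odot> R) S \<Zcomp> ba (sw Q R \<otimes> ii S)))) \<Zcomp> (mm P ((R \<odot> Q) \<odot> S) \<Zcomp> ba (ii P \<otimes> ali R Q S)) \<Zcomp> ba (al P R (Q \<odot> S))"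
    by (subst mm_nat'[symmetric, of "ii P" P P "sw Q R \<otimes> ii S" "(Q \<odot> R) \<odot> S" "(R \<odot> Q) \<odot> S"]) (use X in simp_all)
  also have "\<dots> = ali (bo P) (bo Q) (bo R \<odot> bo S) \<Zcomp> (ii (bo P) \<otimes> (al (bo Q) (bo R) (bo S) \<Zcomp> (((mm Q R \<Zcomp> ba (sw Q R))) \<otimes> ii (bo S)) \<Zcomp> mm (R \<odot> Q) S)) \<Zcomp> (mm P ((R \<odot> Q) \<odot> S) \<Zcomp> ba (ii P \<otimes> ali R Q S)) \<Zcomp> ba (al P R (Q \<odot> S))"
    by (subst mm_nat'[symmetric, of "sw Q R" "Q \<odot> R" "R \<odot> Q" "ii S" S S]) (use X in simp_all)
  also have "\<dots> = ali (bo P) (bo Q) (bo R \<odot> bo S) \<Zcomp> (ii (bo P) \<otimes> (al (bo Q) (bo R) (bo S) \<Zcomp> (sw (bo Q) (bo R) \<otimes> ii (bo S)) \<Zcomp> (mm R Q \<otimes> ii (bo S)) \<Zcomp> mm (R \<odot> Q) S)) \<Zcomp> (mm P ((R \<odot> Q) \<odot> S) \<Zcomp> ba (ii P \<otimes> ali R Q S)) \<Zcomp> ba (al P R (Q \<odot> S))"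
    by (subst mm_sym[of Q R]) (use X in simp_all)
  also have "\<dots> = ali (bo P) (bo Q) (bo R \<odot> bo S) \<Zcomp> (ii (bo P) \<otimes> (al (bo Q) (bo R) (bo S) \<Zcomp> (sw (bo Q) (bo R) \<otimes> ii (bo S)) \<Zcomp> ((mm R Q \<otimes> ii (bo S)) \<Zcomp> mm (R \<odot> Q) S \<Zcomp> ba (ali R Q S)))) \<Zcomp> mm P (R \<odot> (Q \<odot> S)) \<Zcomp> ba (al P R (Q \<odot> S))"
    by (subst mm_nat'[symmetric, of "ii P" P P "ali R Q S" "(R \<odot> Q) \<odot> S" "R \<odot> (Q \<odot> S)"]) (use X in simp_all)
  also have "\<dots> = ali (bo P) (bo Q) (bo R \<odot> bo S) \<Zcomp> (ii (bo P) \<otimes> (al (bo Q) (bo R) (bo S) \<Zcomp> (sw (bo Q) (bo R) \<otimes> ii (bo S)) \<Zcomp> ali (bo R) (bo Q) (bo S) \<Zcomp> (ii (bo R) \<otimes> mm Q S))) \<Zcomp> ((ii (bo P) \<otimes> mm R (Q \<odot> S)) \<Zcomp> mm P (R \<odot> (Q \<odot> S)) \<Zcomp> ba (al P R (Q \<odot> S)))"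
    by (subst mm_assoc_inv[symmetric, of R Q S]) (use X in simp_all)
  also have "\<dots> = ali (bo P) (bo Q) (bo R \<odot> bo S) \<Zcomp> (ii (bo P) \<otimes> (al (bo Q) (bo R) (bo S) \<Zcomp> (sw (bo Q) (bo R) \<otimes> ii (bo S)) \<Zcomp> ali (bo R) (bo Q) (bo S))) \<Zcomp> ((ii (bo P) \<otimes> (ii (bo R) \<otimes> mm Q S)) \<Zcomp> al (bo P) (bo R) (bo (Q \<odot> S))) \<Zcomp> (mm P R \<otimes> ii (bo (Q \<odot> S))) \<Zcomp> mm (P \<odot> R) (Q \<odot> S)"
    by (subst mm_assoc'[of P R "Q \<odot> S"]) (use X in simp_all)
  also have "\<dots> = Tau C (bo P) (bo Q) (bo R) (bo S) \<Zcomp> (mm P R \<otimes> mm Q S) \<Zcomp> mm (P \<odot> R) (Q \<odot> S)"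
    by (subst al_nat'[of "ii (bo P)" "bo P" "bo P" "ii (bo R)" "bo R" "bo R" "mm Q S" "bo Q \<odot> bo S" "bo (Q \<odot> S)"]) (use X in \<open>simp_all add: Tau_def\<close>)
  finally show ?thesis by (rule sym)
qed

lemma tri_inv: assumes X: "Ob X" "Ob Y"
  shows "(rui X \<otimes> ii Y) \<Zcomp> ali X KK Y = ii X \<otimes> lui Y"
proof -
  have "(rui X \<otimes> ii Y) \<Zcomp> ali X KK Y = (rui X \<otimes> ii Y) \<Zcomp> ali X KK Y \<Zcomp> (ii X \<otimes> lu Y) \<Zcomp> (ii X \<otimes> lui Y)"
    using X by simp
  also have "\<dots> = (rui X \<otimes> ii Y) \<Zcomp> ali X KK Y \<Zcomp> (al X KK Y \<Zcomp> (ru X \<otimes> ii Y)) \<Zcomp> (ii X \<otimes> lui Y)"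
    by (subst triangle) (use X in simp_all)
  also have "\<dots> = ii X \<otimes> lui Y" using X by simp
  finally show ?thesis .
qed

lemma Tau_inv[simp]: assumes X: "Ob P" "Ob Q" "Ob R" "Ob S"
  shows "Tau C P Q R S \<Zcomp> Tau C P R Q S = ii ((P \<odot> Q) \<odot> (R \<odot> S))"
  using X by (simp add: Tau_def)

lemma Tau_inv2[simp]: assumes X: "Ob P" "Ob Q" "Ob R" "Ob S" "Ar r" "sr r = (P \<odot> Q) \<odot> (R \<odot> S)"
  shows "Tau C P Q R S \<Zcomp> (Tau C P R Q S \<Zcomp> r) = r"
  by (subst cmp_assoc[symmetric]) (use X in simp_all)

lemma canc_expr: assumes h: "HH h Y (bo Z)" and Z: "Ob Z"
  shows "rui Y \<Zcomp> (ii Y \<otimes> mk) \<Zcomp> ((h \<otimes> ii (bo KK)) \<Zcomp> mm Z KK) \<Zcomp> ba (ru Z) = h"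
proof -
  have [simp]: "Ob Y" "Ob Z" using h Z HH_ob by auto
  have "rui Y \<Zcomp> (ii Y \<otimes> mk) \<Zcomp> ((h \<otimes> ii (bo KK)) \<Zcomp> mm Z KK) \<Zcomp> ba (ru Z) = rui Y \<Zcomp> (h \<otimes> ii KK) \<Zcomp> ((ii (bo Z) \<otimes> mk) \<Zcomp> mm Z KK \<Zcomp> ba (ru Z))"
    using h by simp
  also have "\<dots> = rui Y \<Zcomp> ((h \<otimes> ii KK) \<Zcomp> ru (bo Z))"
    by (subst mm_unit_r') (use h in simp_all)
  also have "\<dots> = rui Y \<Zcomp> ru Y \<Zcomp> h"
    by (subst ru_nat'[of h Y "bo Z"]) (use h in simp_all)
  also have "\<dots> = h" using h by simp
  finally show ?thesis .
qed

lemma canc: assumes h: "HH h1 Y (bo Z)" "HH h2 Y (bo Z)" and Z: "Ob Z"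
  and eq: "(h1 \<otimes> ii (bo KK)) \<Zcomp> mm Z KK = (h2 \<otimes> ii (bo KK)) \<Zcomp> mm Z KK"
  shows "h1 = h2"
proof -
  have "h1 = rui Y \<Zcomp> (ii Y \<otimes> mk) \<Zcomp> ((h1 \<otimes> ii (bo KK)) \<Zcomp> mm Z KK) \<Zcomp> ba (ru Z)" using canc_expr[OF h(1) Z] by simp
  also have "\<dots> = rui Y \<Zcomp> (ii Y \<otimes> mk) \<Zcomp> ((h2 \<otimes> ii (bo KK)) \<Zcomp> mm Z KK) \<Zcomp> ba (ru Z)" by (simp only: eq)
  also have "\<dots> = h2" using canc_expr[OF h(2) Z] by simp
  finally show ?thesis .
qed

lemma canc_expr2: assumes h: "HH h Y (bo Z)" and Z: "Ob Z"
  shows "(ii Y \<otimes> (lui (bo KK) \<Zcomp> (mk \<otimes> ii (bo KK)))) \<Zcomp> ((h \<otimes> mm KK KK) \<Zcomp> mm Z (KK \<odot> KK)) \<Zcomp> ba (ii Z \<otimes> lu KK) = (h \<otimes> ii (bo KK)) \<Zcomp> mm Z KK"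
proof -
  have [simp]: "Ob Y" "Ob Z" using h Z HH_ob by auto
  have "(ii Y \<otimes> (lui (bo KK) \<Zcomp> (mk \<otimes> ii (bo KK)))) \<Zcomp> ((h \<otimes> mm KK KK) \<Zcomp> mm Z (KK \<odot> KK)) \<Zcomp> ba (ii Z \<otimes> lu KK)
     = (ii Y \<otimes> (lui (bo KK) \<Zcomp> (mk \<otimes> ii (bo KK)))) \<Zcomp> (h \<otimes> mm KK KK) \<Zcomp> (mm Z (KK \<odot> KK) \<Zcomp> ba (ii Z \<otimes> lu KK))"
    using h by simp
  also have "\<dots> = (h \<otimes> (lui (bo KK) \<Zcomp> ((mk \<otimes> ii (bo KK)) \<Zcomp> mm KK KK \<Zcomp> ba (lu KK)))) \<Zcomp> mm Z KK"
    by (subst mm_nat'[symmetric, of "ii Z" Z Z "lu KK" "KK \<odot> KK" KK]) (use h in simp_all)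
  also have "\<dots> = (h \<otimes> ii (bo KK)) \<Zcomp> mm Z KK"
    by (subst mm_unit_l') (use h in simp_all)
  finally show ?thesis .
qed

end

locale bim = smcm +
  fixes A mu u d e
  assumes bm: "is_cocomm_bimonoid C A mu u d e"
begin
lemma A_ob[simp]: "Ob A" using bm unfolding is_cocomm_bimonoid_def is_bimonoid_def by blast
lemma bm_ty[simp]: "Ar mu" "sr mu = A \<odot> A" "tg mu = A" "Ar u" "sr u = KK" "tg u = A"
  "Ar d" "sr d = A" "tg d = A \<odot> A" "Ar e" "sr e = A" "tg e = KK"
  using bm unfolding is_cocomm_bimonoid_def is_bimonoid_def hom_iff by blast+
lemma G5b: assumes X: "Ob X"
  shows "ba (lui X) \<Zcomp> ba (u \<otimes> ii X) = lui (bo X) \<Zcomp> ((mk \<Zcomp> ba u) \<otimes> ii (bo X)) \<Zcomp> mm A X"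
proof -
  have "ba (lui X) \<Zcomp> ba (u \<otimes> ii X) = lui (bo X) \<Zcomp> (mk \<otimes> ii (bo X)) \<Zcomp> (mm KK X \<Zcomp> ba (u \<otimes> ii X))"
    by (subst lu_unit_inv[symmetric, OF X]) (use X in simp_all)
  also have "\<dots> = lui (bo X) \<Zcomp> ((mk \<Zcomp> ba u) \<otimes> ii (bo X)) \<Zcomp> mm A X"
    by (subst mm_nat'[symmetric, of u KK A "ii X" X X]) (use X in simp_all)
  finally show ?thesis .
qed

end

locale wty = bim +
  fixes w
  assumes wty[simp]: "Ar w" "sr w = A" "tg w = bo A"
begin
lemma D_nat: assumes f: "Ar f"
  shows "(ii A \<otimes> ba f) \<Zcomp> (w \<otimes> ii (bo (tg f))) \<Zcomp> mm A (tg f) = (w \<otimes> ii (bo (sr f))) \<Zcomp> mm A (sr f) \<Zcomp> ba (ii A \<otimes> f)"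
proof -
  have "(ii A \<otimes> ba f) \<Zcomp> (w \<otimes> ii (bo (tg f))) \<Zcomp> mm A (tg f) = (w \<otimes> ii (bo (sr f))) \<Zcomp> ((ba (ii A) \<otimes> ba f) \<Zcomp> mm A (tg f))"
    using f by simp
  also have "\<dots> = (w \<otimes> ii (bo (sr f))) \<Zcomp> mm A (sr f) \<Zcomp> ba (ii A \<otimes> f)"
    by (subst mm_nat'[of "ii A" A A f "sr f" "tg f"]) (use f in simp_all)
  finally show ?thesis .
qed

lemma D_L1: assumes X: "Ob X"
  shows "(ii A \<otimes> ((w \<otimes> ii (bo X)) \<Zcomp> mm A X)) \<Zcomp> (w \<otimes> ii (bo (A \<odot> X))) \<Zcomp> mm A (A \<odot> X) \<Zcomp> ba (al A A X)
     = al A A (bo X) \<Zcomp> (((w \<otimes> w) \<Zcomp> mm A A) \<otimes> ii (bo X)) \<Zcomp> mm (A \<odot> A) X"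
proof -
  have "(ii A \<otimes> ((w \<otimes> ii (bo X)) \<Zcomp> mm A X)) \<Zcomp> (w \<otimes> ii (bo (A \<odot> X))) \<Zcomp> mm A (A \<odot> X) \<Zcomp> ba (al A A X)
     = (w \<otimes> (w \<otimes> ii (bo X))) \<Zcomp> ((ii (bo A) \<otimes> mm A X) \<Zcomp> mm A (A \<odot> X) \<Zcomp> ba (al A A X))"
    using X by simp
  also have "\<dots> = ((w \<otimes> (w \<otimes> ii (bo X))) \<Zcomp> al (bo A) (bo A) (bo X)) \<Zcomp> (mm A A \<otimes> ii (bo X)) \<Zcomp> mm (A \<odot> A) X"
    by (subst mm_assoc') (use X in simp_all)
  also have "\<dots> = al A A (bo X) \<Zcomp> (((w \<otimes> w) \<Zcomp> mm A A) \<otimes> ii (bo X)) \<Zcomp> mm (A \<odot> A) X"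
    by (subst al_nat'[of w A "bo A" w A "bo A" "ii (bo X)" "bo X" "bo X"]) (use X in simp_all)
  finally show ?thesis .
qed

lemma G4a: assumes X: "Ob X"
  shows "(ii A \<otimes> ((w \<otimes> ii (bo X)) \<Zcomp> mm A X)) \<Zcomp> (w \<otimes> ii (bo (A \<odot> X))) \<Zcomp> mm A (A \<odot> X) \<Zcomp> ba (al A A X) \<Zcomp> ba (mu \<otimes> ii X)
       = al A A (bo X) \<Zcomp> (((w \<otimes> w) \<Zcomp> mm A A \<Zcomp> ba mu) \<otimes> ii (bo X)) \<Zcomp> mm A X"
proof -
  have "(ii A \<otimes> ((w \<otimes> ii (bo X)) \<Zcomp> mm A X)) \<Zcomp> (w \<otimes> ii (bo (A \<odot> X))) \<Zcomp> mm A (A \<odot> X) \<Zcomp> ba (al A A X) \<Zcomp> ba (mu \<otimes> ii X)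
      = ((ii A \<otimes> ((w \<otimes> ii (bo X)) \<Zcomp> mm A X)) \<Zcomp> (w \<otimes> ii (bo (A \<odot> X))) \<Zcomp> mm A (A \<odot> X) \<Zcomp> ba (al A A X)) \<Zcomp> ba (mu \<otimes> ii X)"
    using X by simp
  also have "\<dots> = al A A (bo X) \<Zcomp> (((w \<otimes> w) \<Zcomp> mm A A) \<otimes> ii (bo X)) \<Zcomp> (mm (A \<odot> A) X \<Zcomp> ba (mu \<otimes> ii X))"
    by (subst D_L1[OF X]) (use X in simp_all)
  also have "\<dots> = al A A (bo X) \<Zcomp> (((w \<otimes> w) \<Zcomp> mm A A \<Zcomp> ba mu) \<otimes> ii (bo X)) \<Zcomp> mm A X"
    by (subst mm_nat'[symmetric, of mu "A \<odot> A" A "ii X" X X]) (use X in simp_all)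
  finally show ?thesis .
qed

lemma G8a: assumes X: "Ob X" "Ob Y"
  shows "(d \<otimes> ii (bo X \<odot> bo Y)) \<Zcomp> Tau C A A (bo X) (bo Y) \<Zcomp> (((w \<otimes> ii (bo X)) \<Zcomp> mm A X) \<otimes> ((w \<otimes> ii (bo Y)) \<Zcomp> mm A Y)) \<Zcomp> mm (A \<odot> X) (A \<odot> Y)
       = ((d \<Zcomp> (w \<otimes> w) \<Zcomp> mm A A) \<otimes> mm X Y) \<Zcomp> mm (A \<odot> A) (X \<odot> Y) \<Zcomp> ba (Tau C A A X Y)"
proof -
  have "(d \<otimes> ii (bo X \<odot> bo Y)) \<Zcomp> Tau C A A (bo X) (bo Y) \<Zcomp> (((w \<otimes> ii (bo X)) \<Zcomp> mm A X) \<otimes> ((w \<otimes> ii (bo Y)) \<Zcomp> mm A Y)) \<Zcomp> mm (A \<odot> X) (A \<odot> Y)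
      = (d \<otimes> ii (bo X \<odot> bo Y)) \<Zcomp> (Tau C A A (bo X) (bo Y) \<Zcomp> ((w \<otimes> ii (bo X)) \<otimes> (w \<otimes> ii (bo Y)))) \<Zcomp> (mm A X \<otimes> mm A Y) \<Zcomp> mm (A \<odot> X) (A \<odot> Y)"
    using X by simp
  also have "\<dots> = ((d \<Zcomp> (w \<otimes> w)) \<otimes> ii (bo X \<odot> bo Y)) \<Zcomp> (Tau C (bo A) (bo A) (bo X) (bo Y) \<Zcomp> (mm A X \<otimes> mm A Y) \<Zcomp> mm (A \<odot> X) (A \<odot> Y))"
    by (subst Tau_nat[symmetric, of w A "bo A" w A "bo A" "ii (bo X)" "bo X" "bo X" "ii (bo Y)" "bo Y" "bo Y"]) (use X in simp_all)
  also have "\<dots> = ((d \<Zcomp> (w \<otimes> w) \<Zcomp> mm A A) \<otimes> mm X Y) \<Zcomp> mm (A \<odot> A) (X \<odot> Y) \<Zcomp> ba (Tau C A A X Y)"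
    by (subst mm_tau) (use X in simp_all)
  finally show ?thesis .
qed

lemma G8b: assumes X: "Ob X" "Ob Y"
  shows "(ii A \<otimes> mm X Y) \<Zcomp> (w \<otimes> ii (bo (X \<odot> Y))) \<Zcomp> mm A (X \<odot> Y) \<Zcomp> ba (d \<otimes> ii (X \<odot> Y)) \<Zcomp> ba (Tau C A A X Y)
       = ((w \<Zcomp> ba d) \<otimes> mm X Y) \<Zcomp> mm (A \<odot> A) (X \<odot> Y) \<Zcomp> ba (Tau C A A X Y)"
proof -
  have "((w \<Zcomp> ba d) \<otimes> mm X Y) \<Zcomp> mm (A \<odot> A) (X \<odot> Y) \<Zcomp> ba (Tau C A A X Y)
      = (w \<otimes> mm X Y) \<Zcomp> ((ba d \<otimes> ba (ii (X \<odot> Y))) \<Zcomp> mm (A \<odot> A) (X \<odot> Y)) \<Zcomp> ba (Tau C A A X Y)"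
    using X by simp
  also have "\<dots> = (w \<otimes> mm X Y) \<Zcomp> (mm A (X \<odot> Y) \<Zcomp> ba (d \<otimes> ii (X \<odot> Y))) \<Zcomp> ba (Tau C A A X Y)"
    by (subst mm_nat'[of d A "A \<odot> A" "ii (X \<odot> Y)" "X \<odot> Y" "X \<odot> Y"]) (use X in simp_all)
  also have "\<dots> = (ii A \<otimes> mm X Y) \<Zcomp> (w \<otimes> ii (bo (X \<odot> Y))) \<Zcomp> mm A (X \<odot> Y) \<Zcomp> ba (d \<otimes> ii (X \<odot> Y)) \<Zcomp> ba (Tau C A A X Y)"
    using X by simp
  finally show ?thesis by (rule sym)
qed

end

locale wco = wty +
  assumes wep: "w \<Zcomp> ep A = ii A" and wdl: "w \<Zcomp> dl A = w \<Zcomp> ba w"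
  and mu_m: "mu \<Zcomp> w = (w \<otimes> w) \<Zcomp> mm A A \<Zcomp> ba mu"
  and u_m: "u \<Zcomp> w = mk \<Zcomp> ba u"
  and d_m: "d \<Zcomp> (w \<otimes> w) \<Zcomp> mm A A = w \<Zcomp> ba d"
  and e_m: "e \<Zcomp> mk = w \<Zcomp> ba e"
begin

lemma G4: assumes X: "Ob X"
  shows "al A A (bo X) \<Zcomp> (mu \<otimes> ii (bo X)) \<Zcomp> (w \<otimes> ii (bo X)) \<Zcomp> mm A X
       = (ii A \<otimes> ((w \<otimes> ii (bo X)) \<Zcomp> mm A X)) \<Zcomp> (w \<otimes> ii (bo (A \<odot> X))) \<Zcomp> mm A (A \<odot> X) \<Zcomp> ba (al A A X) \<Zcomp> ba (mu \<otimes> ii X)"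
proof -
  have "al A A (bo X) \<Zcomp> (mu \<otimes> ii (bo X)) \<Zcomp> (w \<otimes> ii (bo X)) \<Zcomp> mm A X = al A A (bo X) \<Zcomp> (((mu \<Zcomp> w)) \<otimes> ii (bo X)) \<Zcomp> mm A X"
    using X by simp
  also have "\<dots> = al A A (bo X) \<Zcomp> (((w \<otimes> w) \<Zcomp> mm A A) \<otimes> ii (bo X)) \<Zcomp> ((ba mu \<otimes> ba (ii X)) \<Zcomp> mm A X)"
    by (subst mu_m) (use X in simp_all)
  also have "\<dots> = (al A A (bo X) \<Zcomp> (((w \<otimes> w) \<Zcomp> mm A A) \<otimes> ii (bo X)) \<Zcomp> mm (A \<odot> A) X) \<Zcomp> ba (mu \<otimes> ii X)"
    by (subst mm_nat'[of mu "A \<odot> A" A "ii X" X X]) (use X in simp_all)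
  also have "\<dots> = (ii A \<otimes> ((w \<otimes> ii (bo X)) \<Zcomp> mm A X)) \<Zcomp> (w \<otimes> ii (bo (A \<odot> X))) \<Zcomp> mm A (A \<odot> X) \<Zcomp> ba (al A A X) \<Zcomp> ba (mu \<otimes> ii X)"
    by (subst D_L1[symmetric, OF X]) (use X in simp_all)
  finally show ?thesis .
qed

lemma G5: assumes X: "Ob X"
  shows "lui (bo X) \<Zcomp> (u \<otimes> ii (bo X)) \<Zcomp> (w \<otimes> ii (bo X)) \<Zcomp> mm A X = ba (lui X) \<Zcomp> ba (u \<otimes> ii X)"
proof -
  have "lui (bo X) \<Zcomp> (u \<otimes> ii (bo X)) \<Zcomp> (w \<otimes> ii (bo X)) \<Zcomp> mm A X = lui (bo X) \<Zcomp> ((u \<Zcomp> w) \<otimes> ii (bo X)) \<Zcomp> mm A X"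
    using X by simp
  also have "\<dots> = lui (bo X) \<Zcomp> (mk \<otimes> ii (bo X)) \<Zcomp> ((ba u \<otimes> ba (ii X)) \<Zcomp> mm A X)"
    by (subst u_m) (use X in simp_all)
  also have "\<dots> = (lui (bo X) \<Zcomp> (mk \<otimes> ii (bo X)) \<Zcomp> mm KK X) \<Zcomp> ba (u \<otimes> ii X)"
    by (subst mm_nat'[of u KK A "ii X" X X]) (use X in simp_all)
  also have "\<dots> = ba (lui X) \<Zcomp> ba (u \<otimes> ii X)"
    by (subst lu_unit_inv[OF X]) (rule refl)
  finally show ?thesis .
qed

lemma G6: assumes X: "Ob X"
  shows "(ii A \<otimes> dl X) \<Zcomp> (w \<otimes> ii (bo (bo X))) \<Zcomp> mm A (bo X) \<Zcomp> ba ((w \<otimes> ii (bo X)) \<Zcomp> mm A X)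
       = (w \<otimes> ii (bo X)) \<Zcomp> mm A X \<Zcomp> dl (A \<odot> X)"
proof -
  have "(w \<otimes> ii (bo X)) \<Zcomp> mm A X \<Zcomp> dl (A \<odot> X) = (w \<otimes> ii (bo X)) \<Zcomp> (dl A \<otimes> dl X) \<Zcomp> mm (bo A) (bo X) \<Zcomp> ba (mm A X)"
    by (subst mm_dl') (use X in simp_all)
  also have "\<dots> = ((w \<Zcomp> dl A) \<otimes> dl X) \<Zcomp> mm (bo A) (bo X) \<Zcomp> ba (mm A X)"
    using X by simp
  also have "\<dots> = (w \<otimes> dl X) \<Zcomp> ((ba w \<otimes> ba (ii (bo X))) \<Zcomp> mm (bo A) (bo X)) \<Zcomp> ba (mm A X)"
    by (subst wdl) (use X in simp_all)
  also have "\<dots> = (w \<otimes> dl X) \<Zcomp> (mm A (bo X) \<Zcomp> ba (w \<otimes> ii (bo X))) \<Zcomp> ba (mm A X)"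
    by (subst mm_nat'[of w A "bo A" "ii (bo X)" "bo X" "bo X"]) (use X in simp_all)
  also have "\<dots> = (ii A \<otimes> dl X) \<Zcomp> (w \<otimes> ii (bo (bo X))) \<Zcomp> mm A (bo X) \<Zcomp> ba ((w \<otimes> ii (bo X)) \<Zcomp> mm A X)"
    using X by simp
  finally show ?thesis by (rule sym)
qed

lemma G7: assumes X: "Ob X"
  shows "(w \<otimes> ii (bo X)) \<Zcomp> mm A X \<Zcomp> ep (A \<odot> X) = ii A \<otimes> ep X"
proof -
  have "(w \<otimes> ii (bo X)) \<Zcomp> mm A X \<Zcomp> ep (A \<odot> X) = (w \<otimes> ii (bo X)) \<Zcomp> (ep A \<otimes> ep X)"
    by (subst mm_ep) (use X in simp_all)
  also have "\<dots> = (w \<Zcomp> ep A) \<otimes> ep X" using X by simp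
  also have "\<dots> = ii A \<otimes> ep X" by (subst wep) (rule refl)
  finally show ?thesis .
qed

lemma G8: assumes X: "Ob X" "Ob Y"
  shows "(d \<otimes> ii (bo X \<odot> bo Y)) \<Zcomp> Tau C A A (bo X) (bo Y) \<Zcomp> (((w \<otimes> ii (bo X)) \<Zcomp> mm A X) \<otimes> ((w \<otimes> ii (bo Y)) \<Zcomp> mm A Y)) \<Zcomp> mm (A \<odot> X) (A \<odot> Y)
       = (ii A \<otimes> mm X Y) \<Zcomp> (w \<otimes> ii (bo (X \<odot> Y))) \<Zcomp> mm A (X \<odot> Y) \<Zcomp> ba (d \<otimes> ii (X \<odot> Y)) \<Zcomp> ba (Tau C A A X Y)"
proof -
  have "(d \<otimes> ii (bo X \<odot> bo Y)) \<Zcomp> Tau C A A (bo X) (bo Y) \<Zcomp> (((w \<otimes> ii (bo X)) \<Zcomp> mm A X) \<otimes> ((w \<otimes> ii (bo Y)) \<Zcomp> mm A Y)) \<Zcomp> mm (A \<odot> X) (A \<odot> Y)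
      = (d \<otimes> ii (bo X \<odot> bo Y)) \<Zcomp> (Tau C A A (bo X) (bo Y) \<Zcomp> ((w \<otimes> ii (bo X)) \<otimes> (w \<otimes> ii (bo Y)))) \<Zcomp> (mm A X \<otimes> mm A Y) \<Zcomp> mm (A \<odot> X) (A \<odot> Y)"
    using X by simp
  also have "\<dots> = ((d \<Zcomp> (w \<otimes> w)) \<otimes> ii (bo X \<odot> bo Y)) \<Zcomp> (Tau C (bo A) (bo A) (bo X) (bo Y) \<Zcomp> (mm A X \<otimes> mm A Y) \<Zcomp> mm (A \<odot> X) (A \<odot> Y))"
    by (subst Tau_nat[symmetric, of w A "bo A" w A "bo A" "ii (bo X)" "bo X" "bo X" "ii (bo Y)" "bo Y" "bo Y"]) (use X in simp_all)
  also have "\<dots> = ((d \<Zcomp> (w \<otimes> w) \<Zcomp> mm A A) \<otimes> mm X Y) \<Zcomp> mm (A \<odot> A) (X \<odot> Y) \<Zcomp> ba (Tau C A A X Y)"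
    by (subst mm_tau) (use X in simp_all)
  also have "\<dots> = (w \<otimes> mm X Y) \<Zcomp> ((ba d \<otimes> ba (ii (X \<odot> Y))) \<Zcomp> mm (A \<odot> A) (X \<odot> Y)) \<Zcomp> ba (Tau C A A X Y)"
    by (subst d_m) (use X in simp_all)
  also have "\<dots> = (w \<otimes> mm X Y) \<Zcomp> (mm A (X \<odot> Y) \<Zcomp> ba (d \<otimes> ii (X \<odot> Y))) \<Zcomp> ba (Tau C A A X Y)"
    by (subst mm_nat'[of d A "A \<odot> A" "ii (X \<odot> Y)" "X \<odot> Y" "X \<odot> Y"]) (use X in simp_all)
  also have "\<dots> = (ii A \<otimes> mm X Y) \<Zcomp> (w \<otimes> ii (bo (X \<odot> Y))) \<Zcomp> mm A (X \<odot> Y) \<Zcomp> ba (d \<otimes> ii (X \<odot> Y)) \<Zcomp> ba (Tau C A A X Y)"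
    using X by simp
  finally show ?thesis .
qed

lemma G9: "ru A \<Zcomp> e \<Zcomp> mk = (ii A \<otimes> mk) \<Zcomp> (w \<otimes> ii (bo KK)) \<Zcomp> mm A KK \<Zcomp> ba (ru A \<Zcomp> e)"
proof -
  have "(ii A \<otimes> mk) \<Zcomp> (w \<otimes> ii (bo KK)) \<Zcomp> mm A KK \<Zcomp> ba (ru A \<Zcomp> e) = (w \<otimes> ii KK) \<Zcomp> ((ii (bo A) \<otimes> mk) \<Zcomp> mm A KK \<Zcomp> ba (ru A)) \<Zcomp> ba e"
    by simp
  also have "\<dots> = ((w \<otimes> ii KK) \<Zcomp> ru (bo A)) \<Zcomp> ba e"
    by (subst mm_unit_r') simp_all
  also have "\<dots> = ru A \<Zcomp> (w \<Zcomp> ba e)"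
    by (subst ru_nat'[of w A "bo A"]) simp_all
  also have "\<dots> = ru A \<Zcomp> e \<Zcomp> mk"
    by (subst e_m[symmetric]) simp_all
  finally show ?thesis by (rule sym)
qed

lemma G10: assumes X: "Ob X" "Ob Y"
  shows "al A (bo X) (bo Y) \<Zcomp> (((w \<otimes> ii (bo X)) \<Zcomp> mm A X) \<otimes> ii (bo Y)) \<Zcomp> mm (A \<odot> X) Y
       = (ii A \<otimes> mm X Y) \<Zcomp> (w \<otimes> ii (bo (X \<odot> Y))) \<Zcomp> mm A (X \<odot> Y) \<Zcomp> ba (al A X Y)"
proof -
  have "(ii A \<otimes> mm X Y) \<Zcomp> (w \<otimes> ii (bo (X \<odot> Y))) \<Zcomp> mm A (X \<odot> Y) \<Zcomp> ba (al A X Y)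
      = (w \<otimes> ii (bo X \<odot> bo Y)) \<Zcomp> ((ii (bo A) \<otimes> mm X Y) \<Zcomp> mm A (X \<odot> Y) \<Zcomp> ba (al A X Y))"
    using X by simp
  also have "\<dots> = ((w \<otimes> (ii (bo X) \<otimes> ii (bo Y))) \<Zcomp> al (bo A) (bo X) (bo Y)) \<Zcomp> (mm A X \<otimes> ii (bo Y)) \<Zcomp> mm (A \<odot> X) Y"
    by (subst mm_assoc') (use X in simp_all)
  also have "\<dots> = al A (bo X) (bo Y) \<Zcomp> (((w \<otimes> ii (bo X)) \<Zcomp> mm A X) \<otimes> ii (bo Y)) \<Zcomp> mm (A \<odot> X) Y"
    by (subst al_nat'[of w A "bo A" "ii (bo X)" "bo X" "bo X" "ii (bo Y)" "bo Y" "bo Y"]) (use X in simp_all)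
  finally show ?thesis by (rule sym)
qed

end


locale lgood = bim +
  fixes lam
  assumes lty[simp]: "Ob X \<Longrightarrow> Ar (lam X)" "Ob X \<Longrightarrow> sr (lam X) = A \<odot> bo X" "Ob X \<Longrightarrow> tg (lam X) = bo (A \<odot> X)"
  and lnat: "Ar f \<Longrightarrow> (ii A \<otimes> ba f) \<Zcomp> lam (tg f) = lam (sr f) \<Zcomp> ba (ii A \<otimes> f)"
  and lmu: "Ob X \<Longrightarrow> al A A (bo X) \<Zcomp> (mu \<otimes> ii (bo X)) \<Zcomp> lam X = (ii A \<otimes> lam X) \<Zcomp> lam (A \<odot> X) \<Zcomp> ba (al A A X \<Zcomp> (mu \<otimes> ii X))"
  and leta: "Ob X \<Longrightarrow> lui (bo X) \<Zcomp> (u \<otimes> ii (bo X)) \<Zcomp> lam X = ba (lui X \<Zcomp> (u \<otimes> ii X))"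
  and ldl: "Ob X \<Longrightarrow> (ii A \<otimes> dl X) \<Zcomp> lam (bo X) \<Zcomp> ba (lam X) = lam X \<Zcomp> dl (A \<odot> X)"
  and lep: "Ob X \<Longrightarrow> lam X \<Zcomp> ep (A \<odot> X) = ii A \<otimes> ep X"
  and ln: "Ob X \<Longrightarrow> Ob Y \<Longrightarrow> (d \<otimes> ii (bo X \<odot> bo Y)) \<Zcomp> Tau C A A (bo X) (bo Y) \<Zcomp> (lam X \<otimes> lam Y) \<Zcomp> mm (A \<odot> X) (A \<odot> Y)
       = (ii A \<otimes> mm X Y) \<Zcomp> lam (X \<odot> Y) \<Zcomp> ba ((d \<otimes> ii (X \<odot> Y)) \<Zcomp> Tau C A A X Y)"
  and lnK: "ru A \<Zcomp> e \<Zcomp> mk = (ii A \<otimes> mk) \<Zcomp> lam KK \<Zcomp> ba (ru A \<Zcomp> e)"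
  and lal: "Ob X \<Longrightarrow> Ob Y \<Longrightarrow> al A (bo X) (bo Y) \<Zcomp> (lam X \<otimes> ii (bo Y)) \<Zcomp> mm (A \<odot> X) Y = (ii A \<otimes> mm X Y) \<Zcomp> lam (X \<odot> Y) \<Zcomp> ba (al A X Y)"
begin

definition "W = rui A \<Zcomp> (ii A \<otimes> mk) \<Zcomp> lam KK \<Zcomp> ba (ru A)"

lemma W_ty[simp]: "Ar W" "sr W = A" "tg W = bo A" unfolding W_def by simp_all

sublocale wty C B A mu u d e W by unfold_locales simp_all

lemma lnat': "HH f X Y \<Longrightarrow> (ii A \<otimes> ba f) \<Zcomp> lam Y = lam X \<Zcomp> ba (ii A \<otimes> f)" using lnat by blast

lemma lal_inv: assumes X: "Ob X" "Ob Y"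
  shows "(lam X \<otimes> ii (bo Y)) \<Zcomp> mm (A \<odot> X) Y = ali A (bo X) (bo Y) \<Zcomp> (ii A \<otimes> mm X Y) \<Zcomp> lam (X \<odot> Y) \<Zcomp> ba (al A X Y)"
proof -
  have "ali A (bo X) (bo Y) \<Zcomp> (ii A \<otimes> mm X Y) \<Zcomp> lam (X \<odot> Y) \<Zcomp> ba (al A X Y) = ali A (bo X) (bo Y) \<Zcomp> (al A (bo X) (bo Y) \<Zcomp> (lam X \<otimes> ii (bo Y)) \<Zcomp> mm (A \<odot> X) Y)"
    by (subst lal[OF X]) (use X in simp_all)
  also have "\<dots> = (lam X \<otimes> ii (bo Y)) \<Zcomp> mm (A \<odot> X) Y" using X by simp
  finally show ?thesis by (rule sym)
qed

lemma R1: assumes X: "Ob X" shows "(W \<otimes> ii (bo X)) \<Zcomp> mm A X = lam X"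
proof -
  have "(W \<otimes> ii (bo X)) \<Zcomp> mm A X = (rui A \<otimes> ii (bo X)) \<Zcomp> ((ii A \<otimes> mk) \<otimes> ii (bo X)) \<Zcomp> (lam KK \<otimes> ii (bo X)) \<Zcomp> ((ba (ru A) \<otimes> ba (ii X)) \<Zcomp> mm A X)"
    unfolding W_def using X by simp
  also have "\<dots> = (rui A \<otimes> ii (bo X)) \<Zcomp> ((ii A \<otimes> mk) \<otimes> ii (bo X)) \<Zcomp> ((lam KK \<otimes> ii (bo X)) \<Zcomp> mm (A \<odot> KK) X) \<Zcomp> ba (ru A \<otimes> ii X)"
    by (subst mm_nat'[of "ru A" "A \<odot> KK" A "ii X" X X]) (use X in simp_all)
  also have "\<dots> = (rui A \<otimes> ii (bo X)) \<Zcomp> (((ii A \<otimes> mk) \<otimes> ii (bo X)) \<Zcomp> ali A (bo KK) (bo X)) \<Zcomp> (ii A \<otimes> mm KK X) \<Zcomp> lam (KK \<odot> X) \<Zcomp> ba (al A KK X) \<Zcomp> ba (ru A \<otimes> ii X)"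
    by (subst lal_inv) (use X in simp_all)
  also have "\<dots> = ((rui A \<otimes> ii (bo X)) \<Zcomp> ali A KK (bo X)) \<Zcomp> (ii A \<otimes> (mk \<otimes> ii (bo X))) \<Zcomp> (ii A \<otimes> mm KK X) \<Zcomp> lam (KK \<odot> X) \<Zcomp> ba (al A KK X \<Zcomp> (ru A \<otimes> ii X))"
    by (subst ali_nat'[of "ii A" A A mk KK "bo KK" "ii (bo X)" "bo X" "bo X"]) (use X in simp_all)
  also have "\<dots> = (ii A \<otimes> lui (bo X)) \<Zcomp> (ii A \<otimes> (mk \<otimes> ii (bo X))) \<Zcomp> (ii A \<otimes> mm KK X) \<Zcomp> lam (KK \<odot> X) \<Zcomp> ba (al A KK X \<Zcomp> (ru A \<otimes> ii X))"
    by (subst tri_inv) (use X in simp_all)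
  also have "\<dots> = (ii A \<otimes> (lui (bo X) \<Zcomp> (mk \<otimes> ii (bo X)) \<Zcomp> mm KK X)) \<Zcomp> lam (KK \<odot> X) \<Zcomp> ba (ii A \<otimes> lu X)"
    by (subst triangle) (use X in simp_all)
  also have "\<dots> = ((ii A \<otimes> ba (lui X)) \<Zcomp> lam (KK \<odot> X)) \<Zcomp> ba (ii A \<otimes> lu X)"
    by (subst lu_unit_inv) (use X in simp_all)
  also have "\<dots> = lam X \<Zcomp> ba (ii A \<otimes> lui X) \<Zcomp> ba (ii A \<otimes> lu X)"
    by (subst lnat'[of "lui X" X "KK \<odot> X"]) (use X in simp_all)
  also have "\<dots> = lam X" using X by simp
  finally show ?thesis .
qed

lemma C1: "W \<Zcomp> ep A = ii A"
proof -
  have "W \<Zcomp> ep A = rui A \<Zcomp> (ii A \<otimes> mk) \<Zcomp> lam KK \<Zcomp> (ba (ru A) \<Zcomp> ep A)"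
    unfolding W_def by simp
  also have "\<dots> = rui A \<Zcomp> (ii A \<otimes> mk) \<Zcomp> (lam KK \<Zcomp> ep (A \<odot> KK)) \<Zcomp> ru A"
    by (subst ep_nat'[of "ru A" "A \<odot> KK" A]) simp_all
  also have "\<dots> = rui A \<Zcomp> (ii A \<otimes> (mk \<Zcomp> ep KK)) \<Zcomp> ru A"
    by (subst lep) simp_all
  also have "\<dots> = ii A" by (subst mk_ep) simp
  finally show ?thesis .
qed

lemma C2: "W \<Zcomp> dl A = W \<Zcomp> ba W"
proof -
  have "W \<Zcomp> dl A = rui A \<Zcomp> (ii A \<otimes> mk) \<Zcomp> lam KK \<Zcomp> (ba (ru A) \<Zcomp> dl A)"
    unfolding W_def by simp
  also have "\<dots> = rui A \<Zcomp> (ii A \<otimes> mk) \<Zcomp> (lam KK \<Zcomp> dl (A \<odot> KK)) \<Zcomp> ba (ba (ru A))"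
    by (subst dl_nat'[of "ru A" "A \<odot> KK" A]) simp_all
  also have "\<dots> = rui A \<Zcomp> (ii A \<otimes> (mk \<Zcomp> dl KK)) \<Zcomp> lam (bo KK) \<Zcomp> ba (lam KK) \<Zcomp> ba (ba (ru A))"
    by (subst ldl[symmetric]) simp_all
  also have "\<dots> = rui A \<Zcomp> (ii A \<otimes> mk) \<Zcomp> ((ii A \<otimes> ba mk) \<Zcomp> lam (bo KK)) \<Zcomp> ba (lam KK) \<Zcomp> ba (ba (ru A))"
    by (subst mk_dl) simp_all
  also have "\<dots> = rui A \<Zcomp> (ii A \<otimes> mk) \<Zcomp> (lam KK \<Zcomp> ba (ii A \<otimes> mk)) \<Zcomp> ba (lam KK) \<Zcomp> ba (ba (ru A))"
    by (subst lnat'[of mk KK "bo KK"]) simp_all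
  also have "\<dots> = W \<Zcomp> ba W"
    unfolding W_def by simp
  finally show ?thesis .
qed

lemma Me: "e \<Zcomp> mk = W \<Zcomp> ba e"
proof -
  have "W \<Zcomp> ba e = rui A \<Zcomp> ((ii A \<otimes> mk) \<Zcomp> lam KK \<Zcomp> ba (ru A \<Zcomp> e))"
    unfolding W_def by simp
  also have "\<dots> = rui A \<Zcomp> (ru A \<Zcomp> e \<Zcomp> mk)"
    by (subst lnK[symmetric]) simp_all
  also have "\<dots> = e \<Zcomp> mk" by simp
  finally show ?thesis by (rule sym)
qed

lemma Mu: "u \<Zcomp> W = mk \<Zcomp> ba u"
proof -
  have eq: "lui (bo KK) \<Zcomp> ((u \<Zcomp> W) \<otimes> ii (bo KK)) \<Zcomp> mm A KK = lui (bo KK) \<Zcomp> ((mk \<Zcomp> ba u) \<otimes> ii (bo KK)) \<Zcomp> mm A KK"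
  proof -
    have "lui (bo KK) \<Zcomp> ((u \<Zcomp> W) \<otimes> ii (bo KK)) \<Zcomp> mm A KK = lui (bo KK) \<Zcomp> (u \<otimes> ii (bo KK)) \<Zcomp> ((W \<otimes> ii (bo KK)) \<Zcomp> mm A KK)"
      by simp
    also have "\<dots> = lui (bo KK) \<Zcomp> (u \<otimes> ii (bo KK)) \<Zcomp> lam KK"
      by (subst R1) simp_all
    also have "\<dots> = ba (lui KK) \<Zcomp> ba (u \<otimes> ii KK)"
      by (subst leta) simp_all
    also have "\<dots> = lui (bo KK) \<Zcomp> ((mk \<Zcomp> ba u) \<otimes> ii (bo KK)) \<Zcomp> mm A KK"
      by (subst G5b) simp_all
    finally show ?thesis .
  qed
  have "((u \<Zcomp> W) \<otimes> ii (bo KK)) \<Zcomp> mm A KK = lu (bo KK) \<Zcomp> (lui (bo KK) \<Zcomp> ((u \<Zcomp> W) \<otimes> ii (bo KK)) \<Zcomp> mm A KK)"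
    by simp
  also have "\<dots> = lu (bo KK) \<Zcomp> (lui (bo KK) \<Zcomp> ((mk \<Zcomp> ba u) \<otimes> ii (bo KK)) \<Zcomp> mm A KK)"
    by (simp only: eq)
  also have "\<dots> = ((mk \<Zcomp> ba u) \<otimes> ii (bo KK)) \<Zcomp> mm A KK" by simp
  finally have e: "((u \<Zcomp> W) \<otimes> ii (bo KK)) \<Zcomp> mm A KK = ((mk \<Zcomp> ba u) \<otimes> ii (bo KK)) \<Zcomp> mm A KK" .
  show ?thesis by (rule canc[of "u \<Zcomp> W" KK A "mk \<Zcomp> ba u", OF _ _ _ e]) simp_all
qed

lemma Mmu: "mu \<Zcomp> W = (W \<otimes> W) \<Zcomp> mm A A \<Zcomp> ba mu"
proof -
  have eq: "al A A (bo KK) \<Zcomp> ((mu \<Zcomp> W) \<otimes> ii (bo KK)) \<Zcomp> mm A KK = al A A (bo KK) \<Zcomp> (((W \<otimes> W) \<Zcomp> mm A A \<Zcomp> ba mu) \<otimes> ii (bo KK)) \<Zcomp> mm A KK"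
  proof -
    have "al A A (bo KK) \<Zcomp> ((mu \<Zcomp> W) \<otimes> ii (bo KK)) \<Zcomp> mm A KK = al A A (bo KK) \<Zcomp> (mu \<otimes> ii (bo KK)) \<Zcomp> ((W \<otimes> ii (bo KK)) \<Zcomp> mm A KK)"
      by simp
    also have "\<dots> = al A A (bo KK) \<Zcomp> (mu \<otimes> ii (bo KK)) \<Zcomp> lam KK"
      by (subst R1) simp_all
    also have "\<dots> = (ii A \<otimes> lam KK) \<Zcomp> lam (A \<odot> KK) \<Zcomp> ba (al A A KK \<Zcomp> (mu \<otimes> ii KK))"
      by (subst lmu) simp_all
    also have "\<dots> = (ii A \<otimes> ((W \<otimes> ii (bo KK)) \<Zcomp> mm A KK)) \<Zcomp> (W \<otimes> ii (bo (A \<odot> KK))) \<Zcomp> mm A (A \<odot> KK) \<Zcomp> ba (al A A KK) \<Zcomp> ba (mu \<otimes> ii KK)"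
      by (simp add: R1[symmetric])
    also have "\<dots> = al A A (bo KK) \<Zcomp> (((W \<otimes> W) \<Zcomp> mm A A \<Zcomp> ba mu) \<otimes> ii (bo KK)) \<Zcomp> mm A KK"
      by (subst G4a) simp_all
    finally show ?thesis .
  qed
  have "((mu \<Zcomp> W) \<otimes> ii (bo KK)) \<Zcomp> mm A KK = ali A A (bo KK) \<Zcomp> (al A A (bo KK) \<Zcomp> ((mu \<Zcomp> W) \<otimes> ii (bo KK)) \<Zcomp> mm A KK)"
    by simp
  also have "\<dots> = ali A A (bo KK) \<Zcomp> (al A A (bo KK) \<Zcomp> (((W \<otimes> W) \<Zcomp> mm A A \<Zcomp> ba mu) \<otimes> ii (bo KK)) \<Zcomp> mm A KK)"
    by (simp only: eq)
  also have "\<dots> = (((W \<otimes> W) \<Zcomp> mm A A \<Zcomp> ba mu) \<otimes> ii (bo KK)) \<Zcomp> mm A KK" by simp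
  finally have e: "((mu \<Zcomp> W) \<otimes> ii (bo KK)) \<Zcomp> mm A KK = (((W \<otimes> W) \<Zcomp> mm A A \<Zcomp> ba mu) \<otimes> ii (bo KK)) \<Zcomp> mm A KK" .
  show ?thesis by (rule canc[of "mu \<Zcomp> W" "A \<odot> A" A "(W \<otimes> W) \<Zcomp> mm A A \<Zcomp> ba mu", OF _ _ _ e]) simp_all
qed

lemma Md: "d \<Zcomp> (W \<otimes> W) \<Zcomp> mm A A = W \<Zcomp> ba d"
proof -
  have eq: "((d \<Zcomp> (W \<otimes> W) \<Zcomp> mm A A) \<otimes> mm KK KK) \<Zcomp> mm (A \<odot> A) (KK \<odot> KK) \<Zcomp> ba (Tau C A A KK KK)
      = ((W \<Zcomp> ba d) \<otimes> mm KK KK) \<Zcomp> mm (A \<odot> A) (KK \<odot> KK) \<Zcomp> ba (Tau C A A KK KK)"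
  proof -
    have "((d \<Zcomp> (W \<otimes> W) \<Zcomp> mm A A) \<otimes> mm KK KK) \<Zcomp> mm (A \<odot> A) (KK \<odot> KK) \<Zcomp> ba (Tau C A A KK KK)
       = (d \<otimes> ii (bo KK \<odot> bo KK)) \<Zcomp> Tau C A A (bo KK) (bo KK) \<Zcomp> (((W \<otimes> ii (bo KK)) \<Zcomp> mm A KK) \<otimes> ((W \<otimes> ii (bo KK)) \<Zcomp> mm A KK)) \<Zcomp> mm (A \<odot> KK) (A \<odot> KK)"
      by (rule G8a[symmetric]) simp_all
    also have "\<dots> = (d \<otimes> ii (bo KK \<odot> bo KK)) \<Zcomp> Tau C A A (bo KK) (bo KK) \<Zcomp> (lam KK \<otimes> lam KK) \<Zcomp> mm (A \<odot> KK) (A \<odot> KK)"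
      by (simp add: R1)
    also have "\<dots> = (ii A \<otimes> mm KK KK) \<Zcomp> lam (KK \<odot> KK) \<Zcomp> ba ((d \<otimes> ii (KK \<odot> KK)) \<Zcomp> Tau C A A KK KK)"
      by (subst ln) simp_all
    also have "\<dots> = (ii A \<otimes> mm KK KK) \<Zcomp> (W \<otimes> ii (bo (KK \<odot> KK))) \<Zcomp> mm A (KK \<odot> KK) \<Zcomp> ba (d \<otimes> ii (KK \<odot> KK)) \<Zcomp> ba (Tau C A A KK KK)"
      by (simp add: R1[symmetric])
    also have "\<dots> = ((W \<Zcomp> ba d) \<otimes> mm KK KK) \<Zcomp> mm (A \<odot> A) (KK \<odot> KK) \<Zcomp> ba (Tau C A A KK KK)"
      by (subst G8b) simp_all
    finally show ?thesis .
  qed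
  have eq2: "((d \<Zcomp> (W \<otimes> W) \<Zcomp> mm A A) \<otimes> mm KK KK) \<Zcomp> mm (A \<odot> A) (KK \<odot> KK) = ((W \<Zcomp> ba d) \<otimes> mm KK KK) \<Zcomp> mm (A \<odot> A) (KK \<odot> KK)"
  proof -
    have "((d \<Zcomp> (W \<otimes> W) \<Zcomp> mm A A) \<otimes> mm KK KK) \<Zcomp> mm (A \<odot> A) (KK \<odot> KK)
       = (((d \<Zcomp> (W \<otimes> W) \<Zcomp> mm A A) \<otimes> mm KK KK) \<Zcomp> mm (A \<odot> A) (KK \<odot> KK) \<Zcomp> ba (Tau C A A KK KK)) \<Zcomp> ba (Tau C A KK A KK)"
      by simp
    also have "\<dots> = (((W \<Zcomp> ba d) \<otimes> mm KK KK) \<Zcomp> mm (A \<odot> A) (KK \<odot> KK) \<Zcomp> ba (Tau C A A KK KK)) \<Zcomp> ba (Tau C A KK A KK)"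
      by (simp only: eq)
    also have "\<dots> = ((W \<Zcomp> ba d) \<otimes> mm KK KK) \<Zcomp> mm (A \<odot> A) (KK \<odot> KK)" by simp
    finally show ?thesis .
  qed
  have "((d \<Zcomp> (W \<otimes> W) \<Zcomp> mm A A) \<otimes> ii (bo KK)) \<Zcomp> mm (A \<odot> A) KK
      = (ii A \<otimes> (lui (bo KK) \<Zcomp> (mk \<otimes> ii (bo KK)))) \<Zcomp> (((d \<Zcomp> (W \<otimes> W) \<Zcomp> mm A A) \<otimes> mm KK KK) \<Zcomp> mm (A \<odot> A) (KK \<odot> KK)) \<Zcomp> ba (ii (A \<odot> A) \<otimes> lu KK)"
    by (subst canc_expr2) simp_all
  also have "\<dots> = (ii A \<otimes> (lui (bo KK) \<Zcomp> (mk \<otimes> ii (bo KK)))) \<Zcomp> (((W \<Zcomp> ba d) \<otimes> mm KK KK) \<Zcomp> mm (A \<odot> A) (KK \<odot> KK)) \<Zcomp> ba (ii (A \<odot> A) \<otimes> lu KK)"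
    by (simp only: eq2)
  also have "\<dots> = ((W \<Zcomp> ba d) \<otimes> ii (bo KK)) \<Zcomp> mm (A \<odot> A) KK"
    by (subst canc_expr2) simp_all
  finally have e: "((d \<Zcomp> (W \<otimes> W) \<Zcomp> mm A A) \<otimes> ii (bo KK)) \<Zcomp> mm (A \<odot> A) KK = ((W \<Zcomp> ba d) \<otimes> ii (bo KK)) \<Zcomp> mm (A \<odot> A) KK" .
  show ?thesis by (rule canc[of "d \<Zcomp> (W \<otimes> W) \<Zcomp> mm A A" A "A \<odot> A" "W \<Zcomp> ba d", OF _ _ _ e]) simp_all
qed

end


context bim begin

definition "Fw w = (\<lambda>X. if X \<in> Obj C then (w \<otimes> ii (bo X)) \<Zcomp> mm A X else undefined)"
definition "Gl lam = rui A \<Zcomp> (ii A \<otimes> mk) \<Zcomp> lam KK \<Zcomp> ba (ru A)"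

lemma to_lam: assumes H: "is_EM_cocomm_bimonoid C B A w mu u d e"
  shows "is_good_lambda C B A mu u d e (Fw w)"
proof -
  have w: "Ar w" "sr w = A" "tg w = bo A" "w \<Zcomp> ep A = ii A" "w \<Zcomp> dl A = w \<Zcomp> ba w"
    and m: "mu \<Zcomp> w = (w \<otimes> w) \<Zcomp> mm A A \<Zcomp> ba mu" "u \<Zcomp> w = mk \<Zcomp> ba u"
       "d \<Zcomp> (w \<otimes> w) \<Zcomp> mm A A = w \<Zcomp> ba d" "e \<Zcomp> mk = w \<Zcomp> ba e"
    using H unfolding is_EM_cocomm_bimonoid_def is_coalg_def is_coalg_mor_def tcoalg_def hom_iff by simp_all
  interpret wco C B A mu u d e w
    by unfold_locales (use w m in simp_all)
  show ?thesis
    apply (unfold is_good_lambda_def)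
    apply (intro conjI ballI allI impI)
    subgoal by (simp add: Fw_def)
    subgoal by (simp add: Fw_def hom_iff)
    subgoal for f using D_nat[of f] by (simp add: Fw_def)
    subgoal for X using G4[of X] by (simp add: Fw_def muA_def)
    subgoal for X using G5[of X] by (simp add: Fw_def etaA_def)
    subgoal for X using G6[of X] by (simp add: Fw_def)
    subgoal for X using G7[of X] by (simp add: Fw_def)
    subgoal for X Y using G8[of X Y] by (simp add: Fw_def nA_def)
    subgoal using G9 by (simp add: Fw_def nKA_def)
    subgoal for X Y using G10[of X Y] by (simp add: Fw_def)
    done
qed

lemma rt1: assumes H: "is_EM_cocomm_bimonoid C B A w mu u d e"
  shows "Gl (Fw w) = w"
proof -
  have w: "Ar w" "sr w = A" "tg w = bo A"
    using H unfolding is_EM_cocomm_bimonoid_def is_coalg_def hom_iff by simp_all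
  have "Gl (Fw w) = rui A \<Zcomp> (ii A \<otimes> mk) \<Zcomp> ((w \<otimes> ii (bo KK)) \<Zcomp> mm A KK) \<Zcomp> ba (ru A)"
    unfolding Gl_def Fw_def by simp
  also have "\<dots> = w" by (rule canc_expr) (use w in simp_all)
  finally show ?thesis .
qed

lemma good_unpack: assumes H: "is_good_lambda C B A mu u d e lam"
  shows "lgood C B A mu u d e lam"
proof -
  have H1: "\<forall>X\<in>Obj C. lam X \<in> Hom C (A \<odot> bo X) (bo (A \<odot> X))" using H unfolding is_good_lambda_def by blast
  have H2: "\<forall>f\<in>Arr C. (ii A \<otimes> ba f) \<Zcomp> lam (tg f) = lam (sr f) \<Zcomp> ba (ii A \<otimes> f)"
    using H unfolding is_good_lambda_def by blast
  have H3: "\<forall>X\<in>Obj C.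
       Cmp C (muA C A mu (bo X)) (lam X) = Cmp C (Cmp C (ii A \<otimes> lam X) (lam (A \<odot> X))) (ba (muA C A mu X)) \<and>
       Cmp C (etaA C u (bo X)) (lam X) = ba (etaA C u X) \<and>
       Cmp C (Cmp C (ii A \<otimes> dl X) (lam (bo X))) (ba (lam X)) = Cmp C (lam X) (dl (A \<odot> X)) \<and>
       Cmp C (lam X) (ep (A \<odot> X)) = ii A \<otimes> ep X"
    using H unfolding is_good_lambda_def by blast
  have H4: "\<forall>X\<in>Obj C. \<forall>Y\<in>Obj C.
       Cmp C (Cmp C (nA C A d (bo X) (bo Y)) (lam X \<otimes> lam Y)) (mm (A \<odot> X) (A \<odot> Y))
         = Cmp C (Cmp C (ii A \<otimes> mm X Y) (lam (X \<odot> Y))) (ba (nA C A d X Y))"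
    using H unfolding is_good_lambda_def by blast
  have H5: "Cmp C (nKA C A e) mk = Cmp C (Cmp C (ii A \<otimes> mk) (lam KK)) (ba (nKA C A e))"
    using H unfolding is_good_lambda_def by blast
  have H6: "\<forall>X\<in>Obj C. \<forall>Y\<in>Obj C.
       Cmp C (Cmp C (al A (bo X) (bo Y)) (lam X \<otimes> ii (bo Y))) (mm (A \<odot> X) Y)
         = Cmp C (Cmp C (ii A \<otimes> mm X Y) (lam (X \<odot> Y))) (ba (al A X Y))"
    using H unfolding is_good_lambda_def by blast
  have ty: "Ob X \<Longrightarrow> Ar (lam X) \<and> sr (lam X) = A \<odot> bo X \<and> tg (lam X) = bo (A \<odot> X)" for X
    using H1 unfolding hom_iff by blast
  have lt[simp]: "Ob X \<Longrightarrow> Ar (lam X)" "Ob X \<Longrightarrow> sr (lam X) = A \<odot> bo X" "Ob X \<Longrightarrow> tg (lam X) = bo (A \<odot> X)" for X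
    using ty by blast+
  show ?thesis
  proof (unfold_locales)
    fix X assume X: "Ob X"
    show "Ar (lam X)" "sr (lam X) = A \<odot> bo X" "tg (lam X) = bo (A \<odot> X)" using X by simp_all
    show "al A A (bo X) \<Zcomp> (mu \<otimes> ii (bo X)) \<Zcomp> lam X = (ii A \<otimes> lam X) \<Zcomp> lam (A \<odot> X) \<Zcomp> ba (al A A X \<Zcomp> (mu \<otimes> ii X))"
      using H3[rule_format, OF X] X by (simp add: muA_def)
    show "lui (bo X) \<Zcomp> (u \<otimes> ii (bo X)) \<Zcomp> lam X = ba (lui X \<Zcomp> (u \<otimes> ii X))"
      using H3[rule_format, OF X] X by (simp add: etaA_def)
    show "(ii A \<otimes> dl X) \<Zcomp> lam (bo X) \<Zcomp> ba (lam X) = lam X \<Zcomp> dl (A \<odot> X)"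
      using H3[rule_format, OF X] X by simp
    show "lam X \<Zcomp> ep (A \<odot> X) = ii A \<otimes> ep X"
      using H3[rule_format, OF X] X by simp
  next
    fix f assume "Ar f" then show "(ii A \<otimes> ba f) \<Zcomp> lam (tg f) = lam (sr f) \<Zcomp> ba (ii A \<otimes> f)" using H2 by blast
  next
    fix X Y assume X: "Ob X" "Ob Y"
    show "(d \<otimes> ii (bo X \<odot> bo Y)) \<Zcomp> Tau C A A (bo X) (bo Y) \<Zcomp> (lam X \<otimes> lam Y) \<Zcomp> mm (A \<odot> X) (A \<odot> Y)
       = (ii A \<otimes> mm X Y) \<Zcomp> lam (X \<odot> Y) \<Zcomp> ba ((d \<otimes> ii (X \<odot> Y)) \<Zcomp> Tau C A A X Y)"
      using H4[rule_format, OF X(1) X(2)] X by (simp add: nA_def)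
    show "al A (bo X) (bo Y) \<Zcomp> (lam X \<otimes> ii (bo Y)) \<Zcomp> mm (A \<odot> X) Y = (ii A \<otimes> mm X Y) \<Zcomp> lam (X \<odot> Y) \<Zcomp> ba (al A X Y)"
      using H6[rule_format, OF X(1) X(2)] X by simp
  next
    show "ru A \<Zcomp> e \<Zcomp> mk = (ii A \<otimes> mk) \<Zcomp> lam KK \<Zcomp> ba (ru A \<Zcomp> e)"
      using H5 by (simp add: nKA_def)
  qed
qed

lemma to_w: assumes H: "is_good_lambda C B A mu u d e lam"
  shows "is_EM_cocomm_bimonoid C B A (Gl lam) mu u d e"
proof -
  interpret lgood C B A mu u d e lam by (rule good_unpack[OF H])
  have G: "Gl lam = W" unfolding Gl_def W_def ..
  show ?thesis unfolding G is_EM_cocomm_bimonoid_def is_coalg_def is_coalg_mor_def tcoalg_def hom_iff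
    using C1 C2 Me Mu Mmu Md bm by simp
qed

lemma rt2: assumes H: "is_good_lambda C B A mu u d e lam"
  shows "Fw (Gl lam) = lam"
proof
  fix X
  interpret lgood C B A mu u d e lam by (rule good_unpack[OF H])
  have G: "Gl lam = W" unfolding Gl_def W_def ..
  show "Fw (Gl lam) X = lam X"
  proof (cases "Ob X")
    case True then show ?thesis unfolding G Fw_def using R1 by simp
  next
    case False then show ?thesis using H unfolding Fw_def is_good_lambda_def by simp
  qed
qed

end


theorem proposition5p7:
  fixes C :: "('o,'a) smcat" and B :: "('o,'a) smcomonad"
    and A :: 'o and mu u d e :: 'a
  assumes "is_smc C" and "is_sm_comonad C B"
    and "is_cocomm_bimonoid C A mu u d e"
  shows "\<exists>F. bij_betw F {w. is_EM_cocomm_bimonoid C B A w mu u d e}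
                         {lam. is_good_lambda C B A mu u d e lam}"
proof -
  interpret bim C B A mu u d e by unfold_locales (rule assms)+
  show ?thesis
  proof (rule exI[of _ Fw], rule bij_betw_byWitness[where f'=Gl])
    show "\<forall>a\<in>{w. is_EM_cocomm_bimonoid C B A w mu u d e}. Gl (Fw a) = a" using rt1 by blast
    show "\<forall>a\<in>{lam. is_good_lambda C B A mu u d e lam}. Fw (Gl a) = a" using rt2 by blast
    show "Fw ` {w. is_EM_cocomm_bimonoid C B A w mu u d e} \<subseteq> {lam. is_good_lambda C B A mu u d e lam}"
      using to_lam by blast
    show "Gl ` {lam. is_good_lambda C B A mu u d e lam} \<subseteq> {w. is_EM_cocomm_bimonoid C B A w mu u d e}"
      using to_w by blast
  qed
qed
end
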